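(* Let $p,m,n\ge 1$ and $M>1$ be integers, let $N$ be the number of workers, and let $\mathbb{F}$ be a sufficiently large finite field. For fully private coded matrix multiplication (as described in the context) there exist linear coding schemes that achieve a recovery threshold of $2R(p,m,n)+1$.
   Context: Fully private coded matrix multiplication: given lists $\boldsymbol{A}=(A^{(1)},\dots,A^{(M)})$ with $A^{(\ell)}\in\mathbb{F}^{s\times t}$ and $\boldsymbol{B}=(B^{(1)},\dots,B^{(M)})$ with $B^{(\ell)}\in\mathbb{F}^{s\times r}$, and an index $D\in[M]$, the master wants ${A^{(D)}}^\intercal B^{(D)}$. Assume $p\mid s$, $m\mid t$, $n\mid r$; each $A^{(\ell)}$ is partitioned into a $p$-by-$m$ grid of equal-size blocks and each $B^{(\ell)}$ into a $p$-by-$n$ grid of equal-size blocks. There are $N$ workers. The master sends worker $i$ a (possibly random) query $Q_i$ depending on $D$; worker $i$ encodes $\boldsymbol{A}$ into $\tilde A_i\in\mathbb{F}^{\frac{s}{p}\times\frac{t}{m}}$ and $\boldsymbol{B}$ into $\tilde B_i\in\mathbb{F}^{\frac{s}{p}\times\frac{r}{n}}$, each a linear combination of the respective blocks with coefficients determined by $Q_i$, computes $\tilde A_i^\intercal\tilde B_i$ and returns it. The master decodes by linear combinations of the received results (coefficients may depend on $D$ and the queries). A scheme achieves recovery threshold $K$ if the master can recover ${A^{(D)}}^\intercal B^{(D)}$ from the results of any subset of $K$ workers. Privacy requirement: $I(D;Q_i,\boldsymbol{A},\boldsymbol{B})=0$ for every $i\in[N]$, where $\boldsymbol{A},\boldsymbol{B},D$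 are uniformly random. $R(p,m,n)$ denotes the bilinear complexity (tensor rank of the matrix multiplication tensor) of multiplying an $m$-by-$p$ matrix by a $p$-by-$n$ matrix. *)

theory Defs
  imports "HOL-Algebra.Ring" "HOL-Probability.Probability_Mass_Function"
begin

text \<open>Matrices are represented as functions nat => nat => 'a, with explicit dimension
bounds.
Indices are 0-based: files l < M, workers i < N, block rows u < p, block columns j < m, k < n.\<close>

type_synonym 'a mat = "nat \<Rightarrow> nat \<Rightarrow> 'a"

definition mat_in :: "'a ring \<Rightarrow> nat \<Rightarrow> nat \<Rightarrow> 'a mat \<Rightarrow> bool" where
  "mat_in F a b X \<longleftrightarrow> (\<forall>i<a. \<forall>j<b. X i j \<in> carrier F)"

definition bilinear_alg :: "'a ring \<Rightarrow> nat \<Rightarrow> nat \<Rightarrow> nat \<Rightarrow> nat \<Rightarrow> bool" where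
  "bilinear_alg F p m n r \<longleftrightarrow>
    (\<exists>u v w.
       (\<forall>q<r. \<forall>a<m. \<forall>b<p. u q a b \<in> carrier F) \<and>
       (\<forall>q<r. \<forall>b<p. \<forall>c<n. v q b c \<in> carrier F) \<and>
       (\<forall>q<r. \<forall>a<m. \<forall>c<n. w q a c \<in> carrier F) \<and>
       (\<forall>X Y. mat_in F m p X \<longrightarrow> mat_in F p n Y \<longrightarrow>
          (\<forall>a<m. \<forall>c<n.
             (\<Oplus>\<^bsub>F\<^esub>b\<in>{..<p}. X a b \<otimes>\<^bsub>F\<^esub> Y b c) =
             (\<Oplus>\<^bsub>F\<^esub>q\<in>{..<r}.
                ((\<Oplus>\<^bsub>F\<^esub>ab\<in>{..<m} \<times> {..<p}. u q (fst ab) (snd ab) \<otimes>\<^bsub>F\<^esub> X (fst ab) (snd ab))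
                 \<otimes>\<^bsub>F\<^esub>
                 (\<Oplus>\<^bsub>F\<^esub>bc\<in>{..<p} \<times> {..<n}. v q (fst bc) (snd bc) \<otimes>\<^bsub>F\<^esub> Y (fst bc) (snd bc)))
                \<otimes>\<^bsub>F\<^esub> w q a c))))"

text \<open>Bilinear complexity R(p,m,n) over F (= tensor rank of the matrix multiplication tensor).\<close>
definition bilinear_complexity :: "'a ring \<Rightarrow> nat \<Rightarrow> nat \<Rightarrow> nat \<Rightarrow> nat" where
  "bilinear_complexity F p m n = (LEAST r. bilinear_alg F p m n r)"

text \<open>A query to one worker: the encoding coefficients
  (alpha l u j) for block (u,j) of A^(l) and (beta l u k) for block (u,k) of B^(l).\<close>
type_synonym 'a query = "(nat \<Rightarrow> nat \<Rightarrow> nat \<Rightarrow> 'a) \<times> (nat \<Rightarrow> nat \<Rightarrow> nat \<Rightarrow> 'a)"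

definition query_in :: "'a ring \<Rightarrow> nat \<Rightarrow> nat \<Rightarrow> nat \<Rightarrow> nat \<Rightarrow> 'a query \<Rightarrow> bool" where
  "query_in F p m n M Q \<longleftrightarrow>
     (\<forall>l<M. \<forall>u<p. \<forall>j<m. fst Q l u j \<in> carrier F) \<and>
     (\<forall>l<M. \<forall>u<p. \<forall>k<n. snd Q l u k \<in> carrier F)"

definition encA :: "'a ring \<Rightarrow> nat \<Rightarrow> nat \<Rightarrow> nat \<Rightarrow> nat \<Rightarrow> nat \<Rightarrow>
    (nat \<Rightarrow> nat \<Rightarrow> nat \<Rightarrow> 'a) \<Rightarrow> (nat \<Rightarrow> 'a mat) \<Rightarrow> 'a mat" where
  "encA F p m M s t alpha A = (\<lambda>x y.
     \<Oplus>\<^bsub>F\<^esub>luj\<in>{..<M} \<times> {..<p} \<times> {..<m}.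
        alpha (fst luj) (fst (snd luj)) (snd (snd luj)) \<otimes>\<^bsub>F\<^esub>
        A (fst luj) (fst (snd luj) * (s div p) + x) (snd (snd luj) * (t div m) + y))"

definition encB :: "'a ring \<Rightarrow> nat \<Rightarrow> nat \<Rightarrow> nat \<Rightarrow> nat \<Rightarrow> nat \<Rightarrow>
    (nat \<Rightarrow> nat \<Rightarrow> nat \<Rightarrow> 'a) \<Rightarrow> (nat \<Rightarrow> 'a mat) \<Rightarrow> 'a mat" where
  "encB F p n M s r beta B = (\<lambda>x y.
     \<Oplus>\<^bsub>F\<^esub>luk\<in>{..<M} \<times> {..<p} \<times> {..<n}.
        beta (fst luk) (fst (snd luk)) (snd (snd luk)) \<otimes>\<^bsub>F\<^esub>
        B (fst luk) (fst (snd luk) * (s div p) + x) (snd (snd luk) * (r div n) + y))"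

definition worker_result :: "'a ring \<Rightarrow> nat \<Rightarrow> nat \<Rightarrow> nat \<Rightarrow> nat \<Rightarrow> nat \<Rightarrow> nat \<Rightarrow> nat \<Rightarrow>
    'a query \<Rightarrow> (nat \<Rightarrow> 'a mat) \<Rightarrow> (nat \<Rightarrow> 'a mat) \<Rightarrow> 'a mat" where
  "worker_result F p m n M s t r Q A B = (\<lambda>x y.
     \<Oplus>\<^bsub>F\<^esub>z\<in>{..<s div p}.
        encA F p m M s t (fst Q) A z x \<otimes>\<^bsub>F\<^esub> encB F p n M s r (snd Q) B z y)"

definition target :: "'a ring \<Rightarrow> nat \<Rightarrow> (nat \<Rightarrow> 'a mat) \<Rightarrow> (nat \<Rightarrow> 'a mat) \<Rightarrow> nat \<Rightarrow> 'a mat" where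
  "target F s A B d = (\<lambda>x y. \<Oplus>\<^bsub>F\<^esub>z\<in>{..<s}. A d z x \<otimes>\<^bsub>F\<^esub> B d z y)"

text \<open>A (randomised) linear scheme: for each desired index d < M, mu d is the joint
distribution of the queries (Q_0, ..., Q_{N-1}) sent to the N workers.
Privacy: the distribution of Q_i does not depend on d (equivalent to I(D; Q_i, A, B) = 0,
since queries depend only on D and the master's randomness, and A, B are independent of D).\<close>
definition valid_private_scheme :: "'a ring \<Rightarrow> nat \<Rightarrow> nat \<Rightarrow> nat \<Rightarrow> nat \<Rightarrow> nat \<Rightarrow>
    (nat \<Rightarrow> (nat \<Rightarrow> 'a query) pmf) \<Rightarrow> bool" where
  "valid_private_scheme F p m n M N mu \<longleftrightarrow>
     (\<forall>d<M. finite (set_pmf (mu d))) \<and>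
     (\<forall>d<M. \<forall>Q\<in>set_pmf (mu d). \<forall>i<N. query_in F p m n M (Q i)) \<and>
     (\<forall>i<N. \<forall>d<M. \<forall>d'<M. map_pmf (\<lambda>Q. Q i) (mu d) = map_pmf (\<lambda>Q. Q i) (mu d'))"

definition achieves_threshold :: "'a ring \<Rightarrow> nat \<Rightarrow> nat \<Rightarrow> nat \<Rightarrow> nat \<Rightarrow> nat \<Rightarrow>
    nat \<Rightarrow> nat \<Rightarrow> nat \<Rightarrow> (nat \<Rightarrow> (nat \<Rightarrow> 'a query) pmf) \<Rightarrow> nat \<Rightarrow> bool" where
  "achieves_threshold F p m n M N s t r mu K \<longleftrightarrow>
     (\<forall>d<M. \<forall>Q\<in>set_pmf (mu d). \<forall>S. S \<subseteq> {..<N} \<and> card S = K \<longrightarrow>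
        (\<exists>c. (\<forall>j<m. \<forall>k<n. \<forall>i\<in>S. c j k i \<in> carrier F) \<and>
             (\<forall>A B. (\<forall>l<M. mat_in F s t (A l)) \<longrightarrow> (\<forall>l<M. mat_in F s r (B l)) \<longrightarrow>
                (\<forall>j<m. \<forall>k<n. \<forall>x<t div m. \<forall>y<r div n.
                   target F s A B d (j * (t div m) + x) (k * (r div n) + y) =
                   (\<Oplus>\<^bsub>F\<^esub>i\<in>S. c j k i \<otimes>\<^bsub>F\<^esub>
                        worker_result F p m n M s t r (Q i) A B x y)))))"

end

theory Submission
  imports Defs
begin


context abelian_monoid begin

lemma finsum_Sigma_prod:
  assumes "finite A" "finite B" "\<And>a b. a\<in>A \<Longrightarrow> b\<in>B \<Longrightarrow> f (a,b) \<in> carrier G"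
  shows "(\<Oplus>p\<in>A\<times>B. f p) = (\<Oplus>a\<in>A. \<Oplus>b\<in>B. f (a,b))"
proof -
  have e: "A \<times> B = (\<Union>a\<in>A. Pair a ` B)" by auto
  have "(\<Oplus>p\<in>A\<times>B. f p) = (\<Oplus>a\<in>A. finsum G f (Pair a ` B))"
    unfolding e
    apply (rule add.finprod_UN_disjoint)
    using assms by (auto simp: pairwise_def disjnt_def)
  also have "\<dots> = (\<Oplus>a\<in>A. \<Oplus>b\<in>B. f (a,b))"
    apply (rule finsum_cong)
    subgoal by simp
    subgoal using assms by (auto intro!: finsum_closed)
    subgoal for a unfolding simp_implies_def by (rule finsum_reindex[of f "Pair a" B, simplified]) (use assms in \<open>auto simp: inj_on_def\<close>)
    done
  finally show ?thesis .
qed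

lemma finsum_swap:
  assumes "finite A" "finite B" "\<And>a b. a\<in>A \<Longrightarrow> b\<in>B \<Longrightarrow> f a b \<in> carrier G"
  shows "(\<Oplus>a\<in>A. \<Oplus>b\<in>B. f a b) = (\<Oplus>b\<in>B. \<Oplus>a\<in>A. f a b)"
  using assms(1,3)
proof (induction A rule: finite_induct)
  case empty
  then show ?case by (simp add: finsum_zero)
next
  case (insert x F)
  have "(\<Oplus>a\<in>insert x F. \<Oplus>b\<in>B. f a b) = (\<Oplus>b\<in>B. f x b) \<oplus> (\<Oplus>a\<in>F. \<Oplus>b\<in>B. f a b)"
    using insert by (auto intro!: finsum_insert finsum_closed)
  also have "\<dots> = (\<Oplus>b\<in>B. f x b) \<oplus> (\<Oplus>b\<in>B. \<Oplus>a\<in>F. f a b)"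
    using insert by simp
  also have "\<dots> = (\<Oplus>b\<in>B. f x b \<oplus> (\<Oplus>a\<in>F. f a b))"
    using insert by (auto intro!: finsum_addf[symmetric] finsum_closed)
  also have "\<dots> = (\<Oplus>b\<in>B. \<Oplus>a\<in>insert x F. f a b)"
    apply (rule add.finprod_cong')
    using insert by (auto intro!: finsum_insert[symmetric] finsum_closed)
  finally show ?case .
qed

lemma finsum_split_nat:
  fixes p s :: nat
  assumes "\<And>i. i < p * s \<Longrightarrow> f i \<in> carrier G"
  shows "(\<Oplus>i\<in>{..<p * s}. f i) = (\<Oplus>u\<in>{..<p}. \<Oplus>z\<in>{..<s}. f (u * s+z))"
proof -
  let ?h = "\<lambda>(u::nat,z::nat). u * s+z"
  have inj: "inj_on ?h ({..<p}\<times>{..<s})"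
  proof (rule inj_onI, clarsimp)
    fix u z u' z' assume "u * s+z = u' * s+z'" "z<s" "z'<s"
    then show "u = u' \<and> z = z'"
      by (metis add.commute add_right_cancel mod_mult_self2 mod_less div_mult_self1 div_less
           add_0 less_nat_zero_code)
  qed
  have img: "?h ` ({..<p}\<times>{..<s}) = {..<p * s}"
  proof
    show "?h ` ({..<p}\<times>{..<s}) \<subseteq> {..<p * s}"
    proof clarsimp
      fix u z assume "u<p" "z<s"
      then have "u * s+z < u * s+s" by simp
      also have "\<dots> = Suc u * s" by simp
      also have "\<dots> \<le> p * s" using \<open>u<p\<close> by (metis Suc_leI mult_le_mono1)
      finally show "u * s+z < p * s" .
    qed
    show "{..<p * s} \<subseteq> ?h ` ({..<p}\<times>{..<s})"
    proof
      fix i assume "i \<in> {..<p * s}"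
      then have i: "i < p * s" by simp
      then have "s > 0" by (cases s) auto
      have "i = ?h (i div s, i mod s)" by simp
      moreover have "i div s < p" using i by (simp add: less_mult_imp_div_less)
      moreover have "i mod s < s" using \<open>s>0\<close> by simp
      ultimately show "i \<in> ?h ` ({..<p}\<times>{..<s})" by blast
    qed
  qed
  have "(\<Oplus>i\<in>{..<p * s}. f i) = finsum G f (?h ` ({..<p}\<times>{..<s}))" using img by simp
  also have "\<dots> = (\<Oplus>x\<in>{..<p}\<times>{..<s}. f (?h x))"
    apply (rule finsum_reindex) using assms img inj by auto
  also have "\<dots> = (\<Oplus>u\<in>{..<p}. \<Oplus>z\<in>{..<s}. f (?h (u,z)))"
    apply (rule finsum_Sigma_prod) using assms img by auto
  finally show ?thesis by simp
qed

end



definition poly_le :: "('a,'b) ring_scheme \<Rightarrow> nat \<Rightarrow> ('a \<Rightarrow> 'a) \<Rightarrow> bool" where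
  "poly_le R d f \<longleftrightarrow> (\<exists>c. (\<forall>g. c g \<in> carrier R) \<and> (\<forall>g. d < g \<longrightarrow> c g = \<zero>\<^bsub>R\<^esub>) \<and>
      (\<forall>x\<in>carrier R. f x = (\<Oplus>\<^bsub>R\<^esub>g\<in>{..d}. c g \<otimes>\<^bsub>R\<^esub> x [^]\<^bsub>R\<^esub> g)))"

context cring begin

lemma poly_leI:
  assumes "\<And>g. c g \<in> carrier R" "\<And>g. d < g \<Longrightarrow> c g = \<zero>"
    "\<And>x. x \<in> carrier R \<Longrightarrow> f x = (\<Oplus>g\<in>{..d}. c g \<otimes> x [^] g)"
  shows "poly_le R d f"
  unfolding poly_le_def using assms by blast

lemma poly_leE:
  assumes "poly_le R d f"
  obtains c where "\<And>g. c g \<in> carrier R" "\<And>g. d < g \<Longrightarrow> c g = \<zero>"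
    "\<And>x. x \<in> carrier R \<Longrightarrow> f x = (\<Oplus>g\<in>{..d}. c g \<otimes> x [^] g)"
  using assms unfolding poly_le_def by blast

lemma poly_le_carrier: "poly_le R d f \<Longrightarrow> x \<in> carrier R \<Longrightarrow> f x \<in> carrier R"
  by (erule poly_leE) (auto intro!: finsum_closed)

lemma poly_le_cong: "poly_le R d f \<Longrightarrow> (\<And>x. x \<in> carrier R \<Longrightarrow> f x = h x) \<Longrightarrow> poly_le R d h"
  unfolding poly_le_def by metis

lemma poly_le_mono:
  assumes "poly_le R d f" "d \<le> d'"
  shows "poly_le R d' f"
proof -
  obtain c where c: "\<And>g. c g \<in> carrier R" "\<And>g. d < g \<Longrightarrow> c g = \<zero>"
    "\<And>x. x \<in> carrier R \<Longrightarrow> f x = (\<Oplus>g\<in>{..d}. c g \<otimes> x [^] g)"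
    using poly_leE[OF assms(1)] by blast
  show ?thesis
  proof (rule poly_leI[of c])
    fix x assume x: "x \<in> carrier R"
    have "(\<Oplus>g\<in>{..d}. c g \<otimes> x [^] g) = (\<Oplus>g\<in>{..d'}. c g \<otimes> x [^] g)"
      by (rule add.finprod_mono_neutral_cong_left) (use c x assms(2) in auto)
    then show "f x = (\<Oplus>g\<in>{..d'}. c g \<otimes> x [^] g)" using c x by simp
  qed (use c assms(2) in auto)
qed

lemma poly_le_zero: "poly_le R d (\<lambda>_. \<zero>)"
proof (rule poly_leI[of "\<lambda>_. \<zero>"])
  fix x assume x: "x \<in> carrier R"
  have "(\<Oplus>g\<in>{..d}. \<zero> \<otimes> x [^] g) = (\<Oplus>g\<in>{..d}. \<zero>)"
    by (rule finsum_cong') (use x in auto)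
  then show "\<zero> = (\<Oplus>g\<in>{..d}. \<zero> \<otimes> x [^] g)" by (simp only: finsum_zero)
qed auto

lemma poly_le_const: "a \<in> carrier R \<Longrightarrow> poly_le R 0 (\<lambda>_. a)"
  by (rule poly_leI[of "\<lambda>g. if g = 0 then a else \<zero>"]) auto

lemma poly_le_add:
  assumes "poly_le R d f" "poly_le R d h"
  shows "poly_le R d (\<lambda>x. f x \<oplus> h x)"
proof -
  obtain c where c: "\<And>g. c g \<in> carrier R" "\<And>g. d < g \<Longrightarrow> c g = \<zero>"
    "\<And>x. x \<in> carrier R \<Longrightarrow> f x = (\<Oplus>g\<in>{..d}. c g \<otimes> x [^] g)"
    using poly_leE[OF assms(1)] by blast
  obtain b where b: "\<And>g. b g \<in> carrier R" "\<And>g. d < g \<Longrightarrow> b g = \<zero>"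
    "\<And>x. x \<in> carrier R \<Longrightarrow> h x = (\<Oplus>g\<in>{..d}. b g \<otimes> x [^] g)"
    using poly_leE[OF assms(2)] by blast
  show ?thesis
  proof (rule poly_leI[of "\<lambda>g. c g \<oplus> b g"])
    fix x assume x: "x \<in> carrier R"
    have "(\<Oplus>g\<in>{..d}. (c g \<oplus> b g) \<otimes> x [^] g) = (\<Oplus>g\<in>{..d}. c g \<otimes> x [^] g \<oplus> b g \<otimes> x [^] g)"
      by (rule finsum_cong) (use b c x in \<open>auto simp: l_distr\<close>)
    also have "\<dots> = (\<Oplus>g\<in>{..d}. c g \<otimes> x [^] g) \<oplus> (\<Oplus>g\<in>{..d}. b g \<otimes> x [^] g)"
      by (rule finsum_addf) (use b c x in auto)
    finally show "f x \<oplus> h x = (\<Oplus>g\<in>{..d}. (c g \<oplus> b g) \<otimes> x [^] g)" using b c x by simp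
  qed (use b c in auto)
qed

lemma poly_le_smult:
  assumes "poly_le R d f" "a \<in> carrier R"
  shows "poly_le R d (\<lambda>x. a \<otimes> f x)"
proof -
  obtain c where c: "\<And>g. c g \<in> carrier R" "\<And>g. d < g \<Longrightarrow> c g = \<zero>"
    "\<And>x. x \<in> carrier R \<Longrightarrow> f x = (\<Oplus>g\<in>{..d}. c g \<otimes> x [^] g)"
    using poly_leE[OF assms(1)] by blast
  show ?thesis
  proof (rule poly_leI[of "\<lambda>g. a \<otimes> c g"])
    fix x assume x: "x \<in> carrier R"
    have "a \<otimes> (\<Oplus>g\<in>{..d}. c g \<otimes> x [^] g) = (\<Oplus>g\<in>{..d}. a \<otimes> (c g \<otimes> x [^] g))"
      by (rule finsum_rdistr) (use c x assms in auto)
    also have "\<dots> = (\<Oplus>g\<in>{..d}. a \<otimes> c g \<otimes> x [^] g)"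
      by (rule finsum_cong) (use c x assms in \<open>auto simp: m_assoc\<close>)
    finally show "a \<otimes> f x = (\<Oplus>g\<in>{..d}. a \<otimes> c g \<otimes> x [^] g)" using c x by simp
  qed (use c assms in auto)
qed

lemma poly_le_finsum:
  assumes "finite I" "\<And>i. i \<in> I \<Longrightarrow> poly_le R d (f i)"
  shows "poly_le R d (\<lambda>x. \<Oplus>i\<in>I. f i x)"
  using assms
proof (induction I rule: finite_induct)
  case empty
  then show ?case using poly_le_zero by simp
next
  case (insert y I)
  have "poly_le R d (\<lambda>x. f y x \<oplus> (\<Oplus>i\<in>I. f i x))"
    using insert by (auto intro!: poly_le_add)
  then show ?case
  proof (rule poly_le_cong)
    fix x assume x: "x \<in> carrier R"
    have fc: "\<And>i. i \<in> insert y I \<Longrightarrow> f i x \<in> carrier R"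
      using insert.prems x poly_le_carrier by blast
    show "f y x \<oplus> (\<Oplus>i\<in>I. f i x) = (\<Oplus>i\<in>insert y I. f i x)"
      by (rule finsum_insert[symmetric]) (use insert.hyps fc in auto)
  qed
qed

lemma poly_le_shift:
  assumes "poly_le R d f"
  shows "poly_le R (Suc d) (\<lambda>x. x \<otimes> f x)"
proof -
  obtain c where c: "\<And>g. c g \<in> carrier R" "\<And>g. d < g \<Longrightarrow> c g = \<zero>"
    "\<And>x. x \<in> carrier R \<Longrightarrow> f x = (\<Oplus>g\<in>{..d}. c g \<otimes> x [^] g)"
    using poly_leE[OF assms(1)] by blast
  let ?c = "\<lambda>g. case g of 0 \<Rightarrow> \<zero> | Suc h \<Rightarrow> c h"
  show ?thesis
  proof (rule poly_leI[of ?c])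
    fix x assume x: "x \<in> carrier R"
    have "(\<Oplus>g\<in>{..Suc d}. ?c g \<otimes> x [^] g) = (\<Oplus>g\<in>{..d}. ?c (Suc g) \<otimes> x [^] Suc g) \<oplus> ?c 0 \<otimes> x [^] (0::nat)"
      by (rule finsum_Suc2) (use c x in \<open>auto split: nat.split\<close>)
    also have "\<dots> = (\<Oplus>g\<in>{..d}. c g \<otimes> x [^] g \<otimes> x)"
      using c x by (auto simp: m_assoc intro!: finsum_closed)
    also have "\<dots> = (\<Oplus>g\<in>{..d}. c g \<otimes> x [^] g) \<otimes> x"
      by (rule finsum_ldistr[symmetric]) (use c x in auto)
    also have "\<dots> = x \<otimes> f x" using c x by (simp add: m_comm finsum_closed)
    finally show "x \<otimes> f x = (\<Oplus>g\<in>{..Suc d}. ?c g \<otimes> x [^] g)" by simp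
  qed (use c in \<open>auto split: nat.split\<close>)
qed

lemma poly_le_powmult:
  assumes "poly_le R d f"
  shows "poly_le R (d + k) (\<lambda>x. x [^] k \<otimes> f x)"
proof (induction k)
  case 0
  show ?case using poly_le_cong[OF assms, of "\<lambda>x. x [^] (0::nat) \<otimes> f x"] poly_le_carrier[OF assms] by simp
next
  case (Suc k)
  have "poly_le R (d + Suc k) (\<lambda>x. x \<otimes> (x [^] k \<otimes> f x))"
    using poly_le_shift[OF Suc] by simp
  then show ?case
    by (rule poly_le_cong) (simp add: m_lcomm poly_le_carrier[OF assms] m_assoc)
qed

lemma poly_le_mult:
  assumes "poly_le R d1 f" "poly_le R d2 h"
  shows "poly_le R (d1 + d2) (\<lambda>x. f x \<otimes> h x)"
proof -
  obtain b where b: "\<And>g. b g \<in> carrier R" "\<And>g. d2 < g \<Longrightarrow> b g = \<zero>"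
    "\<And>x. x \<in> carrier R \<Longrightarrow> h x = (\<Oplus>g\<in>{..d2}. b g \<otimes> x [^] g)"
    using poly_leE[OF assms(2)] by blast
  have "poly_le R (d1 + d2) (\<lambda>x. \<Oplus>g\<in>{..d2}. b g \<otimes> (x [^] g \<otimes> f x))"
  proof (rule poly_le_finsum)
    fix g assume "g \<in> {..d2}"
    then have "poly_le R (d1 + d2) (\<lambda>x. x [^] g \<otimes> f x)"
      using poly_le_mono[OF poly_le_powmult[OF assms(1), of g]] by simp
    then show "poly_le R (d1 + d2) (\<lambda>x. b g \<otimes> (x [^] g \<otimes> f x))"
      using b by (rule_tac poly_le_smult) auto
  qed simp
  then show ?thesis
  proof (rule poly_le_cong)
    fix x assume x: "x \<in> carrier R"
    have fx: "f x \<in> carrier R" using x assms(1) poly_le_carrier by blast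
    have "f x \<otimes> h x = f x \<otimes> (\<Oplus>g\<in>{..d2}. b g \<otimes> x [^] g)" using b x by simp
    also have "\<dots> = (\<Oplus>g\<in>{..d2}. f x \<otimes> (b g \<otimes> x [^] g))"
      by (rule finsum_rdistr) (use b x fx in auto)
    also have "\<dots> = (\<Oplus>g\<in>{..d2}. b g \<otimes> (x [^] g \<otimes> f x))"
      by (rule finsum_cong) (use b x fx in \<open>auto simp: m_ac\<close>)
    finally show "(\<Oplus>g\<in>{..d2}. b g \<otimes> (x [^] g \<otimes> f x)) = f x \<otimes> h x" by simp
  qed
qed

lemma poly_le_lin:
  assumes "b \<in> carrier R"
  shows "poly_le R 1 (\<lambda>x. x \<ominus> b)"
proof -
  have "poly_le R 1 (\<lambda>x. x \<otimes> \<one>)" using poly_le_shift[OF poly_le_const[of \<one>]] by simp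
  moreover have "poly_le R 1 (\<lambda>x. \<ominus> b)" using poly_le_mono[OF poly_le_const[of "\<ominus> b"]] assms by simp
  ultimately have "poly_le R 1 (\<lambda>x. x \<otimes> \<one> \<oplus> \<ominus> b)" by (rule poly_le_add)
  then show ?thesis by (rule poly_le_cong) (use assms in \<open>auto simp: minus_eq\<close>)
qed

lemma poly_le_finprod:
  assumes "finite I" "\<And>i. i \<in> I \<Longrightarrow> b i \<in> carrier R"
  shows "poly_le R (card I) (\<lambda>x. \<Otimes>i\<in>I. (x \<ominus> b i))"
  using assms
proof (induction I rule: finite_induct)
  case empty
  then show ?case using poly_le_const[of \<one>] by simp
next
  case (insert y I)
  have "poly_le R (1 + card I) (\<lambda>x. (x \<ominus> b y) \<otimes> (\<Otimes>i\<in>I. (x \<ominus> b i)))"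
    using poly_le_mult[OF poly_le_lin[of "b y"] insert.IH] insert.prems by auto
  moreover have "card (insert y I) = 1 + card I" using insert by simp
  ultimately have "poly_le R (card (insert y I)) (\<lambda>x. (x \<ominus> b y) \<otimes> (\<Otimes>i\<in>I. (x \<ominus> b i)))" by simp
  then show ?case
  proof (rule poly_le_cong)
    fix x assume x: "x \<in> carrier R"
    show "(x \<ominus> b y) \<otimes> (\<Otimes>i\<in>I. (x \<ominus> b i)) = (\<Otimes>i\<in>insert y I. (x \<ominus> b i))"
      using insert.hyps insert.prems x by (simp add: Pi_def)
  qed
qed

lemma poly_eval_comb:
  assumes "poly_le R d f" "finite S" "\<And>i. i \<in> S \<Longrightarrow> \<gamma> i \<in> carrier R"
    "\<And>i. i \<in> S \<Longrightarrow> X i \<in> carrier R" "\<beta> \<in> carrier R"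
    "\<And>g. g \<le> d \<Longrightarrow> (\<Oplus>i\<in>S. \<gamma> i \<otimes> X i [^] g) = \<beta> [^] g"
  shows "(\<Oplus>i\<in>S. \<gamma> i \<otimes> f (X i)) = f \<beta>"
proof -
  obtain c where c: "\<And>g. c g \<in> carrier R" "\<And>g. d < g \<Longrightarrow> c g = \<zero>"
    "\<And>x. x \<in> carrier R \<Longrightarrow> f x = (\<Oplus>g\<in>{..d}. c g \<otimes> x [^] g)"
    using poly_leE[OF assms(1)] by blast
  have step: "(\<Oplus>i\<in>S. \<gamma> i \<otimes> (c g \<otimes> X i [^] g)) = c g \<otimes> (\<Oplus>i\<in>S. \<gamma> i \<otimes> X i [^] g)" for g
  proof -
    have "c g \<otimes> (\<Oplus>i\<in>S. \<gamma> i \<otimes> X i [^] g) = (\<Oplus>i\<in>S. c g \<otimes> (\<gamma> i \<otimes> X i [^] g))"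
      by (rule finsum_rdistr) (use assms(2,3,4) c(1) in auto)
    also have "\<dots> = (\<Oplus>i\<in>S. \<gamma> i \<otimes> (c g \<otimes> X i [^] g))"
      by (rule finsum_cong') (use assms(3,4) c(1) in \<open>auto simp: m_lcomm\<close>)
    finally show ?thesis by simp
  qed
  have step2: "\<gamma> i \<otimes> f (X i) = (\<Oplus>g\<in>{..d}. \<gamma> i \<otimes> (c g \<otimes> X i [^] g))" if "i \<in> S" for i
  proof -
    have "\<gamma> i \<otimes> f (X i) = \<gamma> i \<otimes> (\<Oplus>g\<in>{..d}. c g \<otimes> X i [^] g)" using c(3) assms(4) that by simp
    also have "\<dots> = (\<Oplus>g\<in>{..d}. \<gamma> i \<otimes> (c g \<otimes> X i [^] g))"
      by (rule finsum_rdistr) (use assms(3,4) c(1) that in auto)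
    finally show ?thesis .
  qed
  have "(\<Oplus>i\<in>S. \<gamma> i \<otimes> f (X i)) = (\<Oplus>i\<in>S. \<Oplus>g\<in>{..d}. \<gamma> i \<otimes> (c g \<otimes> X i [^] g))"
    apply (rule finsum_cong'[OF refl])
    subgoal using assms(3,4) c(1) by (auto intro!: finsum_closed)
    subgoal for i unfolding simp_implies_def by (rule step2)
    done
  also have "\<dots> = (\<Oplus>g\<in>{..d}. \<Oplus>i\<in>S. \<gamma> i \<otimes> (c g \<otimes> X i [^] g))"
    by (rule finsum_swap) (use assms(2,3,4) c(1) in auto)
  also have "\<dots> = (\<Oplus>g\<in>{..d}. c g \<otimes> \<beta> [^] g)"
    apply (rule finsum_cong'[OF refl])
    subgoal using assms(5) c(1) by auto
    subgoal for g unfolding simp_implies_def using step[of g] assms(6)[of g] by simp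
    done
  also have "\<dots> = f \<beta>" using c(3)[OF assms(5)] by simp
  finally show ?thesis .
qed

end



context cring begin

lemma alg1: "d \<in> carrier R \<Longrightarrow> x \<in> carrier R \<Longrightarrow> a \<in> carrier R \<Longrightarrow> p \<in> carrier R \<Longrightarrow>
  d \<otimes> (p \<otimes> x) = (d \<otimes> (x \<ominus> a)) \<otimes> p \<oplus> a \<otimes> (d \<otimes> p)"
  by algebra

lemma alg2: "c \<in> carrier R \<Longrightarrow> x \<in> carrier R \<Longrightarrow> p \<in> carrier R \<Longrightarrow> t \<in> carrier R \<Longrightarrow>
  b \<in> carrier R \<Longrightarrow> q \<in> carrier R \<Longrightarrow>
  c \<otimes> (p \<otimes> x) \<oplus> (b \<otimes> q \<oplus> x \<otimes> t) = x \<otimes> (c \<otimes> p \<oplus> t) \<oplus> b \<otimes> q"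
  by algebra

lemma alg3: "x \<in> carrier R \<Longrightarrow> q \<in> carrier R \<Longrightarrow> b \<in> carrier R \<Longrightarrow>
  x \<otimes> q \<oplus> (b \<ominus> x) \<otimes> q = q \<otimes> b"
  by algebra

lemma add_lcancel_h:
  assumes "c \<in> carrier R" "y \<in> carrier R" "z \<in> carrier R" "c \<oplus> y = c \<oplus> z"
  shows "y = z"
proof -
  have "y = \<ominus> c \<oplus> (c \<oplus> y)" using assms(1-3) by algebra
  also have "\<dots> = \<ominus> c \<oplus> (c \<oplus> z)" using assms(4) by (simp only:)
  also have "\<dots> = z" using assms(1-3) by algebra
  finally show ?thesis .
qed

lemma alg4: "s \<in> carrier R \<Longrightarrow> (\<one> \<ominus> s) \<oplus> s = \<one>"
  by algebra

end

context field begin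

lemma interp_exists:
  assumes "finite S" "inj_on X S" "X ` S \<subseteq> carrier R" "\<beta> \<in> carrier R"
  shows "\<exists>\<gamma>. (\<forall>i. \<gamma> i \<in> carrier R) \<and> (\<forall>g<card S. (\<Oplus>i\<in>S. \<gamma> i \<otimes> X i [^] g) = \<beta> [^] g)"
  using assms(1-3)
proof (induction S rule: finite_induct)
  case empty
  show ?case by (rule exI[of _ "\<lambda>_. \<zero>"]) simp
next
  case (insert a S)
  have XS: "\<And>i. i \<in> S \<Longrightarrow> X i \<in> carrier R" and Xa: "X a \<in> carrier R"
    using insert.prems by auto
  have neq: "\<And>i. i \<in> S \<Longrightarrow> X i \<noteq> X a"
    using insert.prems(1) insert.hyps(2) by (metis inj_on_contraD insertCI)
  obtain \<gamma>' where g': "\<And>i. \<gamma>' i \<in> carrier R"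
    "\<And>g. g < card S \<Longrightarrow> (\<Oplus>i\<in>S. \<gamma>' i \<otimes> X i [^] g) = \<beta> [^] g"
    using insert.IH insert.prems by (auto simp: inj_on_insert)
  have unit: "\<And>i. i \<in> S \<Longrightarrow> X i \<ominus> X a \<in> Units R"
  proof -
    fix i assume i: "i \<in> S"
    have "X i \<ominus> X a \<noteq> \<zero>"
    proof
      assume "X i \<ominus> X a = \<zero>"
      moreover have "X i = (X i \<ominus> X a) \<oplus> X a" using XS[OF i] Xa by algebra
      ultimately have "X i = X a" using Xa by simp
      then show False using neq[OF i] by simp
    qed
    then show "X i \<ominus> X a \<in> Units R" using field_Units XS[OF i] Xa by auto
  qed
  define d where "d i = (if i \<in> S then (\<beta> \<ominus> X a) \<otimes> \<gamma>' i \<otimes> inv (X i \<ominus> X a) else \<zero>)" for i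
  have dc: "\<And>i. d i \<in> carrier R"
    unfolding d_def using g'(1) assms(4) Xa unit by (auto intro!: Units_inv_closed)
  have dkey: "\<And>i. i \<in> S \<Longrightarrow> d i \<otimes> (X i \<ominus> X a) = (\<beta> \<ominus> X a) \<otimes> \<gamma>' i"
  proof -
    fix i assume i: "i \<in> S"
    have c1: "(\<beta> \<ominus> X a) \<otimes> \<gamma>' i \<in> carrier R" using g'(1) assms(4) Xa by auto
    have "d i \<otimes> (X i \<ominus> X a) = ((\<beta> \<ominus> X a) \<otimes> \<gamma>' i) \<otimes> (inv (X i \<ominus> X a) \<otimes> (X i \<ominus> X a))"
      unfolding d_def using i c1 unit[OF i] by (simp add: m_assoc Units_closed Units_inv_closed)
    also have "\<dots> = (\<beta> \<ominus> X a) \<otimes> \<gamma>' i" using unit[OF i] c1 by simp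
    finally show "d i \<otimes> (X i \<ominus> X a) = (\<beta> \<ominus> X a) \<otimes> \<gamma>' i" .
  qed
  define ca where "ca = \<one> \<ominus> (\<Oplus>i\<in>S. d i)"
  have cac: "ca \<in> carrier R" unfolding ca_def using dc by (auto intro!: finsum_closed)
  define T where "T g = (\<Oplus>i\<in>S. d i \<otimes> X i [^] (g::nat))" for g
  have Tc: "\<And>g. T g \<in> carrier R" unfolding T_def using dc XS by (auto intro!: finsum_closed)
  define \<gamma> where "\<gamma> i = (if i = a then ca else d i)" for i
  have split: "(\<Oplus>i\<in>insert a S. \<gamma> i \<otimes> X i [^] g) = ca \<otimes> X a [^] g \<oplus> T g" for g :: nat
  proof -
    have "(\<Oplus>i\<in>insert a S. \<gamma> i \<otimes> X i [^] g) = \<gamma> a \<otimes> X a [^] g \<oplus> (\<Oplus>i\<in>S. \<gamma> i \<otimes> X i [^] g)"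
      by (rule finsum_insert) (use insert.hyps XS Xa dc cac in \<open>auto simp: \<gamma>_def\<close>)
    also have "(\<Oplus>i\<in>S. \<gamma> i \<otimes> X i [^] g) = T g"
      unfolding T_def by (rule finsum_cong') (use insert.hyps XS dc in \<open>auto simp: \<gamma>_def\<close>)
    finally show ?thesis by (simp add: \<gamma>_def)
  qed
  have T0: "T 0 = (\<Oplus>i\<in>S. d i)"
    unfolding T_def by (rule finsum_cong') (use dc in auto)
  have TSuc: "T (Suc g) = (\<beta> \<ominus> X a) \<otimes> \<beta> [^] g \<oplus> X a \<otimes> T g" if g: "g < card S" for g
  proof -
    have e: "d i \<otimes> X i [^] Suc g = (\<beta> \<ominus> X a) \<otimes> (\<gamma>' i \<otimes> X i [^] g) \<oplus> X a \<otimes> (d i \<otimes> X i [^] g)"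
      if i: "i \<in> S" for i
    proof -
      have xi: "X i \<in> carrier R" using XS i by simp
      have p: "X i [^] g \<in> carrier R" using xi by simp
      have "d i \<otimes> X i [^] Suc g = (d i \<otimes> (X i \<ominus> X a)) \<otimes> X i [^] g \<oplus> X a \<otimes> (d i \<otimes> X i [^] g)"
        using alg1[OF dc[of i] xi Xa p] by simp
      also have "\<dots> = (\<beta> \<ominus> X a) \<otimes> (\<gamma>' i \<otimes> X i [^] g) \<oplus> X a \<otimes> (d i \<otimes> X i [^] g)"
        using dkey[OF i] p g'(1)[of i] assms(4) Xa by (simp add: m_assoc)
      finally show ?thesis .
    qed
    have "T (Suc g) = (\<Oplus>i\<in>S. (\<beta> \<ominus> X a) \<otimes> (\<gamma>' i \<otimes> X i [^] g) \<oplus> X a \<otimes> (d i \<otimes> X i [^] g))"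
      unfolding T_def by (rule finsum_cong') (use e XS dc g'(1) assms(4) Xa in auto)
    also have "\<dots> = (\<Oplus>i\<in>S. (\<beta> \<ominus> X a) \<otimes> (\<gamma>' i \<otimes> X i [^] g)) \<oplus> (\<Oplus>i\<in>S. X a \<otimes> (d i \<otimes> X i [^] g))"
      by (rule finsum_addf) (use XS dc g'(1) assms(4) Xa in auto)
    also have "(\<Oplus>i\<in>S. (\<beta> \<ominus> X a) \<otimes> (\<gamma>' i \<otimes> X i [^] g)) = (\<beta> \<ominus> X a) \<otimes> (\<Oplus>i\<in>S. \<gamma>' i \<otimes> X i [^] g)"
      by (rule finsum_rdistr[symmetric]) (use XS g'(1) assms(4) Xa insert.hyps in auto)
    also have "(\<Oplus>i\<in>S. X a \<otimes> (d i \<otimes> X i [^] g)) = X a \<otimes> T g"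
      unfolding T_def by (rule finsum_rdistr[symmetric]) (use XS dc Xa insert.hyps in auto)
    finally show ?thesis using g'(2)[OF g] by simp
  qed
  have claim: "g < Suc (card S) \<Longrightarrow> ca \<otimes> X a [^] g \<oplus> T g = \<beta> [^] g" for g
  proof (induction g)
    case 0
    have "ca \<oplus> (\<Oplus>i\<in>S. d i) = \<one>" unfolding ca_def
      by (rule alg4) (use dc in \<open>auto intro!: finsum_closed\<close>)
    then show ?case using T0 cac by simp
  next
    case (Suc g)
    then have g: "g < card S" by simp
    have IH: "ca \<otimes> X a [^] g \<oplus> T g = \<beta> [^] g" using Suc by simp
    have p1: "X a [^] g \<in> carrier R" "\<beta> [^] g \<in> carrier R" using Xa assms(4) by auto
    have "ca \<otimes> X a [^] Suc g \<oplus> T (Suc g) = X a \<otimes> (ca \<otimes> X a [^] g \<oplus> T g) \<oplus> (\<beta> \<ominus> X a) \<otimes> \<beta> [^] g"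
      using TSuc[OF g] alg2[OF cac Xa p1(1) Tc[of g] _ p1(2), of "\<beta> \<ominus> X a"] Xa assms(4) by simp
    also have "\<dots> = \<beta> [^] Suc g" using IH alg3[OF Xa p1(2) assms(4)] by simp
    finally show ?case .
  qed
  show ?case
  proof (intro exI conjI allI impI)
    show "\<gamma> i \<in> carrier R" for i using dc cac by (simp add: \<gamma>_def)
    fix g assume "g < card (insert a S)"
    then have "g < Suc (card S)" using insert.hyps by simp
    then show "(\<Oplus>i\<in>insert a S. \<gamma> i \<otimes> X i [^] g) = \<beta> [^] g" using split claim by simp
  qed
qed

end


lemma (in abelian_monoid) finsum_collapse:
  assumes "finite A" "x0 \<in> A" "\<And>x. x \<in> A \<Longrightarrow> x \<noteq> x0 \<Longrightarrow> f x = \<zero>" "f \<in> A \<rightarrow> carrier G"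
  shows "finsum G f A = f x0"
proof -
  have "finsum G f A = finsum G f {x0}"
    by (rule add.finprod_mono_neutral_cong_right) (use assms in auto)
  also have "\<dots> = f x0 \<oplus> finsum G f {}"
    by (rule finsum_insert) (use assms in auto)
  also have "\<dots> = f x0" using funcset_mem[OF assms(4,2)] by simp
  finally show ?thesis .
qed

lemma (in abelian_monoid) finsum_allzero:
  assumes "\<And>x. x \<in> A \<Longrightarrow> f x = \<zero>"
  shows "finsum G f A = \<zero>"
  using assms add.finprod_one_eqI by blast

lemma (in domain) finprod_nonzero:
  assumes "finite I" "\<And>i. i \<in> I \<Longrightarrow> f i \<in> carrier R" "\<And>i. i \<in> I \<Longrightarrow> f i \<noteq> \<zero>"
  shows "finprod R f I \<noteq> \<zero>"
  using assms
proof (induction I rule: finite_induct)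
  case empty then show ?case by simp
next
  case (insert x F)
  then have "finprod R f (insert x F) = f x \<otimes> finprod R f F" by (auto intro!: finprod_insert)
  moreover have "finprod R f F \<in> carrier R" using insert by (auto intro!: finprod_closed)
  moreover have "f x \<in> carrier R" "f x \<noteq> \<zero>" using insert.prems by auto
  ultimately show ?case using insert.IH insert.prems integral[of "f x" "finprod R f F"] by auto
qed

lemma (in cring) finprod_zero_factor:
  assumes "finite I" "i0 \<in> I" "\<And>i. i \<in> I \<Longrightarrow> f i \<in> carrier R" "f i0 = \<zero>"
  shows "finprod R f I = \<zero>"
proof -
  have I: "I = insert i0 (I - {i0})" using assms by auto
  have "finprod R f I = f i0 \<otimes> finprod R f (I - {i0})"
    by (subst I, rule finprod_insert) (use assms in auto)
  then show ?thesis using assms by (auto intro!: finprod_closed)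
qed

definition fset :: "('a,'b) ring_scheme \<Rightarrow> (nat \<Rightarrow> nat \<Rightarrow> nat \<Rightarrow> bool) \<Rightarrow> (nat \<Rightarrow> nat \<Rightarrow> nat \<Rightarrow> 'a) set" where
  "fset R P = {f. \<forall>a b c. if P a b c then f a b c \<in> carrier R else f a b c = \<zero>\<^bsub>R\<^esub>}"

definition tmap :: "('a,'b) ring_scheme \<Rightarrow> (nat \<Rightarrow> nat \<Rightarrow> nat \<Rightarrow> bool) \<Rightarrow> (nat \<Rightarrow> nat \<Rightarrow> nat \<Rightarrow> 'a) \<Rightarrow> 'a
    \<Rightarrow> (nat \<Rightarrow> nat \<Rightarrow> nat \<Rightarrow> 'a) \<Rightarrow> (nat \<Rightarrow> nat \<Rightarrow> nat \<Rightarrow> 'a)" where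
  "tmap R P cc t f = (\<lambda>a b c. if P a b c then cc a b c \<oplus>\<^bsub>R\<^esub> t \<otimes>\<^bsub>R\<^esub> f a b c else \<zero>\<^bsub>R\<^esub>)"

lemma fsetD:
  assumes "f \<in> fset R P" "P a b c" shows "f a b c \<in> carrier R"
proof -
  from assms(1) have "if P a b c then f a b c \<in> carrier R else f a b c = \<zero>\<^bsub>R\<^esub>" unfolding fset_def by blast
  with assms(2) show ?thesis by simp
qed

lemma fsetD2:
  assumes "f \<in> fset R P" "\<not> P a b c" shows "f a b c = \<zero>\<^bsub>R\<^esub>"
proof -
  from assms(1) have "if P a b c then f a b c \<in> carrier R else f a b c = \<zero>\<^bsub>R\<^esub>" unfolding fset_def by blast
  with assms(2) show ?thesis by simp
qed

lemma fset_finite: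
  assumes "finite (carrier R)" "\<And>a b c. P a b c \<Longrightarrow> a < M1 \<and> b < M2 \<and> c < M3"
  shows "finite (fset R P)"
proof -
  let ?D = "{..<M1} \<times> {..<M2} \<times> {..<M3}"
  let ?h = "\<lambda>g a b c. if P a b c then g (a,b,c) else \<zero>\<^bsub>R\<^esub>"
  have "fset R P \<subseteq> ?h ` (PiE ?D (\<lambda>_. insert \<zero>\<^bsub>R\<^esub> (carrier R)))"
  proof
    fix f assume f: "f \<in> fset R P"
    let ?g = "restrict (\<lambda>(a,b,c). f a b c) ?D"
    have "?g \<in> PiE ?D (\<lambda>_. insert \<zero>\<^bsub>R\<^esub> (carrier R))"
    proof -
      have fa: "f a b c \<in> insert \<zero>\<^bsub>R\<^esub> (carrier R)" for a b c
        using fsetD[OF f, of a b c] fsetD2[OF f, of a b c] by (cases "P a b c") auto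
      then show ?thesis by (auto simp: restrict_PiE_iff)
    qed
    moreover have "f = ?h ?g"
    proof (intro ext)
      fix a b c show "f a b c = ?h ?g a b c" using fsetD2[OF f, of a b c] assms(2)[of a b c]
        by (cases "P a b c") auto
    qed
    ultimately show "f \<in> ?h ` (PiE ?D (\<lambda>_. insert \<zero>\<^bsub>R\<^esub> (carrier R)))" by blast
  qed
  moreover have "finite (?h ` (PiE ?D (\<lambda>_. insert \<zero>\<^bsub>R\<^esub> (carrier R))))"
    using assms(1) by (intro finite_imageI finite_PiE) auto
  ultimately show ?thesis by (rule finite_subset)
qed


context field begin

lemma fset_nonempty: "(\<lambda>_ _ _. \<zero>) \<in> fset R P"
  unfolding fset_def by simp

lemma tmap_inj:
  assumes "t \<in> carrier R" "t \<noteq> \<zero>" "\<And>a b c. P a b c \<Longrightarrow> cc a b c \<in> carrier R"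
  shows "inj_on (tmap R P cc t) (fset R P)"
proof (rule inj_onI)
  fix f g assume f: "f \<in> fset R P" and g: "g \<in> fset R P" and eq: "tmap R P cc t f = tmap R P cc t g"
  show "f = g"
  proof (intro ext)
    fix a b c
    show "f a b c = g a b c"
    proof (cases "P a b c")
      case True
      have fc: "f a b c \<in> carrier R" and gc: "g a b c \<in> carrier R"
        using fsetD[OF f True] fsetD[OF g True] by auto
      have eqc: "cc a b c \<oplus> t \<otimes> f a b c = cc a b c \<oplus> t \<otimes> g a b c"
        using fun_cong[OF fun_cong[OF fun_cong[OF eq]], of a b c] True unfolding tmap_def by simp
      have "t \<otimes> f a b c = t \<otimes> g a b c"
        using add_lcancel_h[OF assms(3)[OF True] _ _ eqc] fc gc assms(1) by simp
      then show ?thesis using m_lcancel[OF assms(2) assms(1) fc gc] by simp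
    next
      case False
      then show ?thesis using fsetD2[OF f False] fsetD2[OF g False] by simp
    qed
  qed
qed

lemma tmap_image:
  assumes "t \<in> carrier R" "t \<noteq> \<zero>" "\<And>a b c. P a b c \<Longrightarrow> cc a b c \<in> carrier R"
  shows "tmap R P cc t ` fset R P = fset R P"
proof
  show "tmap R P cc t ` fset R P \<subseteq> fset R P"
  proof clarify
    fix f assume f: "f \<in> fset R P"
    show "tmap R P cc t f \<in> fset R P"
      unfolding fset_def tmap_def mem_Collect_eq
    proof (intro allI)
      fix a b c
      show "if P a b c then (if P a b c then cc a b c \<oplus> t \<otimes> f a b c else \<zero>) \<in> carrier R
            else (if P a b c then cc a b c \<oplus> t \<otimes> f a b c else \<zero>) = \<zero>"
        using fsetD[OF f, of a b c] assms(1) assms(3)[of a b c] by auto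
    qed
  qed
  have tu: "t \<in> Units R" using field_Units assms by auto
  show "fset R P \<subseteq> tmap R P cc t ` fset R P"
  proof
    fix g assume g: "g \<in> fset R P"
    let ?f = "\<lambda>a b c. if P a b c then inv t \<otimes> (g a b c \<ominus> cc a b c) else \<zero>"
    have gc: "P a b c \<Longrightarrow> g a b c \<in> carrier R" for a b c
      using fsetD[OF g] by blast
    have "?f \<in> fset R P" unfolding fset_def using gc assms(3) Units_inv_closed[OF tu] by auto
    moreover have "g = tmap R P cc t ?f"
    proof (intro ext)
      fix a b c
      show "g a b c = tmap R P cc t ?f a b c"
      proof (cases "P a b c")
        case True
        have "t \<otimes> (inv t \<otimes> (g a b c \<ominus> cc a b c)) = g a b c \<ominus> cc a b c"
          using tu gc[OF True] assms(3)[OF True] by (simp add: m_assoc[symmetric] Units_closed Units_inv_closed)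
        moreover have "cc a b c \<oplus> (g a b c \<ominus> cc a b c) = g a b c"
          using gc[OF True] assms(3)[OF True] by algebra
        ultimately show ?thesis unfolding tmap_def using True by simp
      next
        case False
        then show ?thesis using fsetD2[OF g False] unfolding tmap_def by simp
      qed
    qed
    ultimately show "g \<in> tmap R P cc t ` fset R P" by blast
  qed
qed

end



locale ffield = field R for R :: "'a ring" (structure)

context ffield begin

lemma bil_exists: "bilinear_alg R p m n (m * (p * n))"
proof -
  define qa where "qa q = q div (p * n)" for q :: nat
  define qb where "qb q = (q mod (p * n)) div n" for q :: nat
  define qc where "qc q = q mod n" for q :: nat
  define u where "u q a b = (if a = qa q \<and> b = qb q then \<one> else \<zero>)" for q a b
  define v where "v q b c = (if b = qb q \<and> c = qc q then \<one> else \<zero>)" for q b c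
  define w where "w q a c = (if a = qa q \<and> c = qc q then \<one> else \<zero>)" for q a c
  have idx: "qa (a0 * (p * n) + (b0 * n + c0)) = a0 \<and> qb (a0 * (p * n) + (b0 * n + c0)) = b0 \<and>
      qc (a0 * (p * n) + (b0 * n + c0)) = c0" if "b0 < p" "c0 < n" for a0 b0 c0
  proof -
    have lt: "b0 * n + c0 < p * n"
    proof -
      have "b0 * n + c0 < b0 * n + n" using that by simp
      also have "\<dots> = Suc b0 * n" by simp
      also have "\<dots> \<le> p * n" using that(1) by (metis Suc_leI mult_le_mono1)
      finally show ?thesis .
    qed
    have pn: "p * n \<noteq> 0" using that by auto
    have e1: "a0 * (p * n) + (b0 * n + c0) = (b0 * n + c0) + a0 * (p * n)" by simp
    have "qa (a0 * (p * n) + (b0 * n + c0)) = a0" unfolding qa_def e1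
      using div_mult_self1[OF pn, of "b0 * n + c0" a0] lt by simp
    moreover have "(a0 * (p * n) + (b0 * n + c0)) mod (p * n) = b0 * n + c0" unfolding e1
      using mod_mult_self1[of "b0 * n + c0" a0 "p * n"] lt by simp
    moreover have "(b0 * n + c0) div n = b0" using that by simp
    moreover have "qc (a0 * (p * n) + (b0 * n + c0)) = c0"
    proof -
      have e: "a0 * (p * n) + (b0 * n + c0) = c0 + (a0 * p + b0) * n" by (simp add: algebra_simps)
      show ?thesis unfolding qc_def e using mod_mult_self1[of c0 "a0 * p + b0" n] that by simp
    qed
    ultimately show ?thesis unfolding qb_def by simp
  qed
  have main: "(\<Oplus>b\<in>{..<p}. X a b \<otimes> Y b c) =
       (\<Oplus>q\<in>{..<m * (p * n)}. (\<Oplus>ab\<in>{..<m} \<times> {..<p}. u q (fst ab) (snd ab) \<otimes> X (fst ab) (snd ab)) \<otimes>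
         (\<Oplus>bc\<in>{..<p} \<times> {..<n}. v q (fst bc) (snd bc) \<otimes> Y (fst bc) (snd bc)) \<otimes> w q a c)"
    if X: "mat_in R m p X" and Y: "mat_in R p n Y" and a: "a < m" and c: "c < n" for X Y a c
  proof -
    have Xc: "a < m \<Longrightarrow> b < p \<Longrightarrow> X a b \<in> carrier R" for a b using X unfolding mat_in_def by blast
    have Yc: "b < p \<Longrightarrow> c < n \<Longrightarrow> Y b c \<in> carrier R" for b c using Y unfolding mat_in_def by blast
      define f where "f q = (\<Oplus>ab\<in>{..<m} \<times> {..<p}. u q (fst ab) (snd ab) \<otimes> X (fst ab) (snd ab)) \<otimes>
         (\<Oplus>bc\<in>{..<p} \<times> {..<n}. v q (fst bc) (snd bc) \<otimes> Y (fst bc) (snd bc)) \<otimes> w q a c" for q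
      have fc: "f q \<in> carrier R" for q
        unfolding f_def using Xc Yc by (intro m_closed finsum_closed funcsetI) (auto simp: u_def v_def w_def)
      have fval: "f (a0 * (p * n) + (b0 * n + c0)) = (if a0 = a \<and> c0 = c then X a0 b0 \<otimes> Y b0 c0 else \<zero>)"
        if "a0 < m" "b0 < p" "c0 < n" for a0 b0 c0
      proof -
        let ?q = "a0 * (p * n) + (b0 * n + c0)"
        have i: "qa ?q = a0" "qb ?q = b0" "qc ?q = c0" using idx[OF that(2,3)] by auto
        have s1: "(\<Oplus>ab\<in>{..<m} \<times> {..<p}. u ?q (fst ab) (snd ab) \<otimes> X (fst ab) (snd ab)) = X a0 b0"
        proof -
          have "(\<Oplus>ab\<in>{..<m} \<times> {..<p}. u ?q (fst ab) (snd ab) \<otimes> X (fst ab) (snd ab)) =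
                u ?q (fst (a0,b0)) (snd (a0,b0)) \<otimes> X (fst (a0,b0)) (snd (a0,b0))"
            by (rule finsum_collapse) (use that Xc in \<open>auto simp: u_def i\<close>)
          then show ?thesis using i that Xc by (simp add: u_def)
        qed
        have s2: "(\<Oplus>bc\<in>{..<p} \<times> {..<n}. v ?q (fst bc) (snd bc) \<otimes> Y (fst bc) (snd bc)) = Y b0 c0"
        proof -
          have "(\<Oplus>bc\<in>{..<p} \<times> {..<n}. v ?q (fst bc) (snd bc) \<otimes> Y (fst bc) (snd bc)) =
                v ?q (fst (b0,c0)) (snd (b0,c0)) \<otimes> Y (fst (b0,c0)) (snd (b0,c0))"
            by (rule finsum_collapse) (use that Yc in \<open>auto simp: v_def i\<close>)
          then show ?thesis using i that Yc by (simp add: v_def)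
        qed
        show ?thesis unfolding f_def s1 s2 using i that Xc Yc by (simp add: w_def)
      qed
      have "(\<Oplus>q\<in>{..<m * (p * n)}. f q) = (\<Oplus>a0\<in>{..<m}. \<Oplus>t\<in>{..<p * n}. f (a0 * (p * n) + t))"
        by (rule finsum_split_nat) (use fc in auto)
      also have "\<dots> = (\<Oplus>a0\<in>{..<m}. \<Oplus>b0\<in>{..<p}. \<Oplus>c0\<in>{..<n}. f (a0 * (p * n) + (b0 * n + c0)))"
        by (rule finsum_cong') (use fc in \<open>auto intro!: finsum_split_nat finsum_closed\<close>)
      also have "\<dots> = (\<Oplus>b0\<in>{..<p}. \<Oplus>c0\<in>{..<n}. f (a * (p * n) + (b0 * n + c0)))"
      proof (rule finsum_collapse)
        show "a \<in> {..<m}" using a by simp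
        fix a0 assume "a0 \<in> {..<m}" "a0 \<noteq> a"
        then show "(\<Oplus>b0\<in>{..<p}. \<Oplus>c0\<in>{..<n}. f (a0 * (p * n) + (b0 * n + c0))) = \<zero>"
          using fval by (auto intro!: finsum_allzero)
      qed (use fc in \<open>auto intro!: finsum_closed\<close>)
      also have "\<dots> = (\<Oplus>b0\<in>{..<p}. X a b0 \<otimes> Y b0 c)"
      proof (rule finsum_cong')
        fix b0 assume b0: "b0 \<in> {..<p}"
        have "(\<Oplus>c0\<in>{..<n}. f (a * (p * n) + (b0 * n + c0))) = f (a * (p * n) + (b0 * n + c))"
          by (rule finsum_collapse) (use fval a b0 c fc in auto)
        also have "\<dots> = X a b0 \<otimes> Y b0 c" using fval a b0 c by simp
        finally show "(\<Oplus>c0\<in>{..<n}. f (a * (p * n) + (b0 * n + c0))) = X a b0 \<otimes> Y b0 c" .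
      qed (use Xc Yc a c in auto)
      finally show ?thesis by (simp add: f_def)
  qed
  show ?thesis unfolding bilinear_alg_def
    apply (rule exI[of _ u], rule exI[of _ v], rule exI[of _ w])
    apply (intro conjI allI impI)
       apply (simp add: u_def)
      apply (simp add: v_def)
     apply (simp add: w_def)
    apply (rule main; assumption)
    done
qed

end



locale sch = ffield +
  fixes Rk :: nat and bt :: "nat \<Rightarrow> 'a" and xp :: "nat \<Rightarrow> 'a"
    and u :: "nat \<Rightarrow> nat \<Rightarrow> nat \<Rightarrow> 'a" and v :: "nat \<Rightarrow> nat \<Rightarrow> nat \<Rightarrow> 'a" and w :: "nat \<Rightarrow> nat \<Rightarrow> nat \<Rightarrow> 'a"
    and p m n M N s t r :: nat
  assumes bt_c: "\<And>q. bt q \<in> carrier R" and xp_c: "\<And>i. xp i \<in> carrier R"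
    and bt_inj: "inj_on bt {..<Rk}" and xp_inj: "inj_on xp {..<N}"
    and bt_xp: "\<And>q i. q < Rk \<Longrightarrow> i < N \<Longrightarrow> bt q \<noteq> xp i"
    and u_c: "\<And>q a b. q < Rk \<Longrightarrow> a < m \<Longrightarrow> b < p \<Longrightarrow> u q a b \<in> carrier R"
    and v_c: "\<And>q b c. q < Rk \<Longrightarrow> b < p \<Longrightarrow> c < n \<Longrightarrow> v q b c \<in> carrier R"
    and w_c: "\<And>q a c. q < Rk \<Longrightarrow> a < m \<Longrightarrow> c < n \<Longrightarrow> w q a c \<in> carrier R"
    and bil: "\<And>X Y a c. mat_in R m p X \<Longrightarrow> mat_in R p n Y \<Longrightarrow> a < m \<Longrightarrow> c < n \<Longrightarrow>
             (\<Oplus>b\<in>{..<p}. X a b \<otimes> Y b c) =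
             (\<Oplus>q\<in>{..<Rk}.
                ((\<Oplus>ab\<in>{..<m} \<times> {..<p}. u q (fst ab) (snd ab) \<otimes> X (fst ab) (snd ab))
                 \<otimes> (\<Oplus>bc\<in>{..<p} \<times> {..<n}. v q (fst bc) (snd bc) \<otimes> Y (fst bc) (snd bc)))
                \<otimes> w q a c)"
    and sdiv: "s = p * (s div p)" and tdiv: "t = m * (t div m)" and rdiv: "r = n * (r div n)"
begin

definition Pz :: "'a \<Rightarrow> 'a" where
  "Pz z = (\<Otimes>q\<in>{..<Rk}. (z \<ominus> bt q))"

definition Lb :: "nat \<Rightarrow> 'a \<Rightarrow> 'a" where
  "Lb q z = inv (\<Otimes>q'\<in>{..<Rk} - {q}. (bt q \<ominus> bt q')) \<otimes> (\<Otimes>q'\<in>{..<Rk} - {q}. (z \<ominus> bt q'))"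

lemma Pz_c: "z \<in> carrier R \<Longrightarrow> Pz z \<in> carrier R"
  unfolding Pz_def using bt_c by (auto intro!: finprod_closed)

lemma Pz_nz: "i < N \<Longrightarrow> Pz (xp i) \<noteq> \<zero>"
  unfolding Pz_def
proof (rule finprod_nonzero)
  fix q assume i: "i < N" and q: "q \<in> {..<Rk}"
  show "xp i \<ominus> bt q \<in> carrier R" using xp_c bt_c by simp
  show "xp i \<ominus> bt q \<noteq> \<zero>"
  proof
    assume "xp i \<ominus> bt q = \<zero>"
    moreover have "xp i = (xp i \<ominus> bt q) \<oplus> bt q" using xp_c[of i] bt_c[of q] by algebra
    ultimately have "xp i = bt q" using bt_c by simp
    then show False using bt_xp[of q i] q i by simp
  qed
qed simp

lemma Pz_bt: "q < Rk \<Longrightarrow> Pz (bt q) = \<zero>"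
  unfolding Pz_def by (rule finprod_zero_factor[of _ q]) (use bt_c in \<open>auto simp: minus_eq r_neg\<close>)

lemma den_unit: "q < Rk \<Longrightarrow> (\<Otimes>q'\<in>{..<Rk} - {q}. (bt q \<ominus> bt q')) \<in> Units R"
proof -
  assume q: "q < Rk"
  have "(\<Otimes>q'\<in>{..<Rk} - {q}. (bt q \<ominus> bt q')) \<noteq> \<zero>"
  proof (rule finprod_nonzero)
    fix q' assume q': "q' \<in> {..<Rk} - {q}"
    show "bt q \<ominus> bt q' \<in> carrier R" using bt_c by simp
    show "bt q \<ominus> bt q' \<noteq> \<zero>"
    proof
      assume "bt q \<ominus> bt q' = \<zero>"
      moreover have "bt q = (bt q \<ominus> bt q') \<oplus> bt q'" using bt_c[of q] bt_c[of q'] by algebra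
      ultimately have "bt q = bt q'" using bt_c by simp
      then show False using bt_inj q q' by (auto dest: inj_onD)
    qed
  qed simp
  moreover have "(\<Otimes>q'\<in>{..<Rk} - {q}. (bt q \<ominus> bt q')) \<in> carrier R" using bt_c by (auto intro!: finprod_closed)
  ultimately show ?thesis using field_Units by auto
qed

lemma Lb_c: "q < Rk \<Longrightarrow> z \<in> carrier R \<Longrightarrow> Lb q z \<in> carrier R"
  unfolding Lb_def using den_unit bt_c by (auto intro!: finprod_closed Units_inv_closed)

lemma Lb_bt: "q' < Rk \<Longrightarrow> q < Rk \<Longrightarrow> Lb q' (bt q) = (if q' = q then \<one> else \<zero>)"
proof (cases "q' = q")
  case True
  assume "q < Rk"
  then show ?thesis unfolding Lb_def True using den_unit[of q] by simp
next
  case False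
  assume q': "q' < Rk" and q: "q < Rk"
  have "(\<Otimes>q''\<in>{..<Rk} - {q'}. (bt q \<ominus> bt q'')) = \<zero>"
    by (rule finprod_zero_factor[of _ q]) (use bt_c q False in \<open>auto simp: minus_eq r_neg\<close>)
  then show ?thesis unfolding Lb_def using False den_unit[OF q'] by (simp add: Units_inv_closed)
qed

lemma Lb_poly: "q < Rk \<Longrightarrow> poly_le R Rk (Lb q)"
proof -
  assume q: "q < Rk"
  have "poly_le R (card ({..<Rk} - {q})) (\<lambda>z. \<Otimes>q'\<in>{..<Rk} - {q}. (z \<ominus> bt q'))"
    by (rule poly_le_finprod) (use bt_c in auto)
  then have "poly_le R Rk (\<lambda>z. \<Otimes>q'\<in>{..<Rk} - {q}. (z \<ominus> bt q'))"
    by (rule poly_le_mono) (use card_Diff1_le[of "{..<Rk}" q] in simp)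
  then show ?thesis unfolding Lb_def
    by (rule poly_le_smult) (use den_unit[OF q] in \<open>simp add: Units_inv_closed\<close>)
qed

lemma Pz_poly: "poly_le R Rk Pz"
  unfolding Pz_def using poly_le_finprod[of "{..<Rk}" bt] bt_c by simp

lemma idx_lt: "b < p' \<Longrightarrow> z < s' \<Longrightarrow> b * s' + z < p' * (s'::nat)"
proof -
  assume "b < p'" "z < s'"
  then have "b * s' + z < b * s' + s'" by simp
  also have "\<dots> = Suc b * s'" by simp
  also have "\<dots> \<le> p' * s'" using \<open>b < p'\<close> by (metis Suc_leI mult_le_mono1)
  finally show ?thesis .
qed

lemma poly_le_rmult: "poly_le R d f \<Longrightarrow> a \<in> carrier R \<Longrightarrow> poly_le R d (\<lambda>x. f x \<otimes> a)"
  by (rule poly_le_cong[OF poly_le_smult[of d f a]]) (auto simp: m_comm poly_le_carrier)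

definition PA :: "nat \<Rightarrow> nat \<Rightarrow> nat \<Rightarrow> bool" where "PA l uu j \<longleftrightarrow> l < M \<and> uu < p \<and> j < m"
definition PB :: "nat \<Rightarrow> nat \<Rightarrow> nat \<Rightarrow> bool" where "PB l uu k \<longleftrightarrow> l < M \<and> uu < p \<and> k < n"

definition cA :: "nat \<Rightarrow> 'a \<Rightarrow> nat \<Rightarrow> nat \<Rightarrow> nat \<Rightarrow> 'a" where
  "cA d z l uu j = (if l = d then (\<Oplus>q\<in>{..<Rk}. Lb q z \<otimes> u q j uu) else \<zero>)"
definition cB :: "nat \<Rightarrow> 'a \<Rightarrow> nat \<Rightarrow> nat \<Rightarrow> nat \<Rightarrow> 'a" where
  "cB d z l uu k = (if l = d then (\<Oplus>q\<in>{..<Rk}. Lb q z \<otimes> v q uu k) else \<zero>)"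

definition af :: "nat \<Rightarrow> (nat \<Rightarrow> nat \<Rightarrow> nat \<Rightarrow> 'a) \<Rightarrow> 'a \<Rightarrow> nat \<Rightarrow> nat \<Rightarrow> nat \<Rightarrow> 'a" where
  "af d \<rho> z = tmap R PA (cA d z) (Pz z) \<rho>"
definition bf :: "nat \<Rightarrow> (nat \<Rightarrow> nat \<Rightarrow> nat \<Rightarrow> 'a) \<Rightarrow> 'a \<Rightarrow> nat \<Rightarrow> nat \<Rightarrow> nat \<Rightarrow> 'a" where
  "bf d \<sigma> z = tmap R PB (cB d z) (Pz z) \<sigma>"

lemma cA_c: "z \<in> carrier R \<Longrightarrow> PA l uu j \<Longrightarrow> cA d z l uu j \<in> carrier R"
  unfolding cA_def PA_def using Lb_c u_c by (auto intro!: finsum_closed)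
lemma cB_c: "z \<in> carrier R \<Longrightarrow> PB l uu k \<Longrightarrow> cB d z l uu k \<in> carrier R"
  unfolding cB_def PB_def using Lb_c v_c by (auto intro!: finsum_closed)

lemma af_c: "\<rho> \<in> fset R PA \<Longrightarrow> z \<in> carrier R \<Longrightarrow> af d \<rho> z l uu j \<in> carrier R"
  unfolding af_def tmap_def using cA_c[of z l uu j d] Pz_c[of z] fsetD[of \<rho> R PA l uu j] by auto
lemma bf_c: "\<sigma> \<in> fset R PB \<Longrightarrow> z \<in> carrier R \<Longrightarrow> bf d \<sigma> z l uu k \<in> carrier R"
  unfolding bf_def tmap_def using cB_c[of z l uu k d] Pz_c[of z] fsetD[of \<sigma> R PB l uu k] by auto

lemma cA_poly: "PA l uu j \<Longrightarrow> poly_le R Rk (\<lambda>z. cA d z l uu j)"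
proof (cases "l = d")
  case True
  assume P: "PA l uu j"
  have "poly_le R Rk (\<lambda>z. \<Oplus>q\<in>{..<Rk}. Lb q z \<otimes> u q j uu)"
    by (rule poly_le_finsum) (use P u_c in \<open>auto simp: PA_def intro!: poly_le_rmult Lb_poly\<close>)
  then show ?thesis unfolding cA_def using True by simp
next
  case False
  then show ?thesis unfolding cA_def using poly_le_zero by simp
qed

lemma cB_poly: "PB l uu k \<Longrightarrow> poly_le R Rk (\<lambda>z. cB d z l uu k)"
proof (cases "l = d")
  case True
  assume P: "PB l uu k"
  have "poly_le R Rk (\<lambda>z. \<Oplus>q\<in>{..<Rk}. Lb q z \<otimes> v q uu k)"
    by (rule poly_le_finsum) (use P v_c in \<open>auto simp: PB_def intro!: poly_le_rmult Lb_poly\<close>)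
  then show ?thesis unfolding cB_def using True by simp
next
  case False
  then show ?thesis unfolding cB_def using poly_le_zero by simp
qed

lemma af_poly: "\<rho> \<in> fset R PA \<Longrightarrow> poly_le R Rk (\<lambda>z. af d \<rho> z l uu j)"
proof (cases "PA l uu j")
  case True
  assume r: "\<rho> \<in> fset R PA"
  have "poly_le R Rk (\<lambda>z. cA d z l uu j \<oplus> Pz z \<otimes> \<rho> l uu j)"
    by (intro poly_le_add cA_poly[OF True] poly_le_rmult Pz_poly fsetD[OF r True])
  then show ?thesis unfolding af_def tmap_def using True by simp
next
  case False
  then show ?thesis unfolding af_def tmap_def using poly_le_zero by simp
qed

lemma bf_poly: "\<sigma> \<in> fset R PB \<Longrightarrow> poly_le R Rk (\<lambda>z. bf d \<sigma> z l uu k)"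
proof (cases "PB l uu k")
  case True
  assume r: "\<sigma> \<in> fset R PB"
  have "poly_le R Rk (\<lambda>z. cB d z l uu k \<oplus> Pz z \<otimes> \<sigma> l uu k)"
    by (intro poly_le_add cB_poly[OF True] poly_le_rmult Pz_poly fsetD[OF r True])
  then show ?thesis unfolding bf_def tmap_def using True by simp
next
  case False
  then show ?thesis unfolding bf_def tmap_def using poly_le_zero by simp
qed

lemma cA_bt: "q < Rk \<Longrightarrow> PA l uu j \<Longrightarrow> cA d (bt q) l uu j = (if l = d then u q j uu else \<zero>)"
proof -
  assume q: "q < Rk" and P: "PA l uu j"
  have "(\<Oplus>q'\<in>{..<Rk}. Lb q' (bt q) \<otimes> u q' j uu) = Lb q (bt q) \<otimes> u q j uu"
    by (rule finsum_collapse) (use q P u_c Lb_bt Lb_c bt_c in \<open>auto simp: PA_def\<close>)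
  then show ?thesis unfolding cA_def using Lb_bt[OF q q] u_c q P by (simp add: PA_def)
qed

lemma cB_bt: "q < Rk \<Longrightarrow> PB l uu k \<Longrightarrow> cB d (bt q) l uu k = (if l = d then v q uu k else \<zero>)"
proof -
  assume q: "q < Rk" and P: "PB l uu k"
  have "(\<Oplus>q'\<in>{..<Rk}. Lb q' (bt q) \<otimes> v q' uu k) = Lb q (bt q) \<otimes> v q uu k"
    by (rule finsum_collapse) (use q P v_c Lb_bt Lb_c bt_c in \<open>auto simp: PB_def\<close>)
  then show ?thesis unfolding cB_def using Lb_bt[OF q q] v_c q P by (simp add: PB_def)
qed

lemma af_bt: "\<rho> \<in> fset R PA \<Longrightarrow> q < Rk \<Longrightarrow> PA l uu j \<Longrightarrow> af d \<rho> (bt q) l uu j = (if l = d then u q j uu else \<zero>)"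
  unfolding af_def tmap_def using cA_bt[of q l uu j d] Pz_bt[of q] fsetD[of \<rho> R PA l uu j] cA_c[OF bt_c, of l uu j d q]
  by simp

lemma bf_bt: "\<sigma> \<in> fset R PB \<Longrightarrow> q < Rk \<Longrightarrow> PB l uu k \<Longrightarrow> bf d \<sigma> (bt q) l uu k = (if l = d then v q uu k else \<zero>)"
  unfolding bf_def tmap_def using cB_bt[of q l uu k d] Pz_bt[of q] fsetD[of \<sigma> R PB l uu k] cB_c[OF bt_c, of l uu k d q]
  by simp

definition datA :: "(nat \<Rightarrow> 'a mat) \<Rightarrow> bool" where "datA A \<longleftrightarrow> (\<forall>l<M. mat_in R s t (A l))"
definition datB :: "(nat \<Rightarrow> 'a mat) \<Rightarrow> bool" where "datB B \<longleftrightarrow> (\<forall>l<M. mat_in R s r (B l))"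

lemma A_c: "datA A \<Longrightarrow> l < M \<Longrightarrow> uu < p \<Longrightarrow> z < s div p \<Longrightarrow> j < m \<Longrightarrow> x < t div m \<Longrightarrow>
    A l (uu * (s div p) + z) (j * (t div m) + x) \<in> carrier R"
proof -
  assume a: "datA A" "l < M" "uu < p" "z < s div p" "j < m" "x < t div m"
  have "uu * (s div p) + z < s" using idx_lt[OF a(3,4)] sdiv by simp
  moreover have "j * (t div m) + x < t" using idx_lt[OF a(5,6)] tdiv by simp
  ultimately show ?thesis using a(1,2) unfolding datA_def mat_in_def by blast
qed

lemma B_c: "datB B \<Longrightarrow> l < M \<Longrightarrow> uu < p \<Longrightarrow> z < s div p \<Longrightarrow> k < n \<Longrightarrow> y < r div n \<Longrightarrow>
    B l (uu * (s div p) + z) (k * (r div n) + y) \<in> carrier R"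
proof -
  assume a: "datB B" "l < M" "uu < p" "z < s div p" "k < n" "y < r div n"
  have "uu * (s div p) + z < s" using idx_lt[OF a(3,4)] sdiv by simp
  moreover have "k * (r div n) + y < r" using idx_lt[OF a(5,6)] rdiv by simp
  ultimately show ?thesis using a(1,2) unfolding datB_def mat_in_def by blast
qed

lemma encA_poly:
  assumes "\<rho> \<in> fset R PA" "datA A" "z0 < s div p" "x < t div m"
  shows "poly_le R Rk (\<lambda>\<zeta>. encA R p m M s t (af d \<rho> \<zeta>) A z0 x)"
  unfolding encA_def
  by (rule poly_le_finsum) (use assms A_c in \<open>auto intro!: poly_le_rmult af_poly\<close>)

lemma encB_poly:
  assumes "\<sigma> \<in> fset R PB" "datB B" "z0 < s div p" "y < r div n"
  shows "poly_le R Rk (\<lambda>\<zeta>. encB R p n M s r (bf d \<sigma> \<zeta>) B z0 y)"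
  unfolding encB_def
  by (rule poly_le_finsum) (use assms B_c in \<open>auto intro!: poly_le_rmult bf_poly\<close>)

definition Wf where
  "Wf d \<rho> \<sigma> A B x y \<zeta> = worker_result R p m n M s t r (af d \<rho> \<zeta>, bf d \<sigma> \<zeta>) A B x y"

lemma Wf_poly:
  assumes "\<rho> \<in> fset R PA" "\<sigma> \<in> fset R PB" "datA A" "datB B" "x < t div m" "y < r div n"
  shows "poly_le R (Rk + Rk) (Wf d \<rho> \<sigma> A B x y)"
  unfolding Wf_def worker_result_def fst_conv snd_conv
  by (rule poly_le_finsum) (use assms in \<open>auto intro!: poly_le_mult encA_poly encB_poly\<close>)

lemma encA_bt:
  assumes r: "\<rho> \<in> fset R PA" and A: "datA A" and q: "q < Rk" and d: "d < M"
    and z0: "z0 < s div p" and x: "x < t div m"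
  shows "encA R p m M s t (af d \<rho> (bt q)) A z0 x =
    (\<Oplus>ab\<in>{..<m} \<times> {..<p}. u q (fst ab) (snd ab) \<otimes> A d (snd ab * (s div p) + z0) (fst ab * (t div m) + x))"
proof -
  let ?g = "\<lambda>l uj. af d \<rho> (bt q) l (fst uj) (snd uj) \<otimes> A l (fst uj * (s div p) + z0) (snd uj * (t div m) + x)"
  have gc: "l < M \<Longrightarrow> uj \<in> {..<p} \<times> {..<m} \<Longrightarrow> ?g l uj \<in> carrier R" for l uj
    using af_c[OF r bt_c] A_c[OF A _ _ z0 _ x] by auto
  have "encA R p m M s t (af d \<rho> (bt q)) A z0 x = (\<Oplus>luj\<in>{..<M} \<times> ({..<p} \<times> {..<m}). ?g (fst luj) (snd luj))"
    unfolding encA_def by simp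
  also have "\<dots> = (\<Oplus>l\<in>{..<M}. \<Oplus>uj\<in>{..<p} \<times> {..<m}. ?g l uj)"
    by (subst finsum_Sigma_prod[of "{..<M}" "{..<p} \<times> {..<m}" "\<lambda>luj. ?g (fst luj) (snd luj)"]) (use gc in auto)
  also have "\<dots> = (\<Oplus>uj\<in>{..<p} \<times> {..<m}. ?g d uj)"
  proof (rule finsum_collapse)
    fix l assume l: "l \<in> {..<M}" "l \<noteq> d"
    show "(\<Oplus>uj\<in>{..<p} \<times> {..<m}. ?g l uj) = \<zero>"
    proof (rule finsum_allzero)
      fix uj assume "uj \<in> {..<p} \<times> {..<m}"
      then show "?g l uj = \<zero>" using af_bt[OF r q, of l "fst uj" "snd uj" d] l A_c[OF A _ _ z0 _ x]
        by (auto simp: PA_def)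
    qed
  qed (use d gc in \<open>auto intro!: finsum_closed\<close>)
  also have "\<dots> = (\<Oplus>uj\<in>{..<p} \<times> {..<m}. u q (snd uj) (fst uj) \<otimes> A d (fst uj * (s div p) + z0) (snd uj * (t div m) + x))"
    by (rule finsum_cong') (use af_bt[OF r q] d u_c[OF q] A_c[OF A d _ z0 _ x] in \<open>auto simp: PA_def\<close>)
  also have "\<dots> = (\<Oplus>ab\<in>{..<m} \<times> {..<p}. u q (fst ab) (snd ab) \<otimes> A d (snd ab * (s div p) + z0) (fst ab * (t div m) + x))"
  proof -
    let ?F = "\<lambda>uj. u q (snd uj) (fst uj) \<otimes> A d (fst uj * (s div p) + z0) (snd uj * (t div m) + x)"
    have sw: "{..<p} \<times> {..<m} = prod.swap ` ({..<m} \<times> {..<p})" by auto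
    have Fc: "?F \<in> prod.swap ` ({..<m} \<times> {..<p}) \<rightarrow> carrier R"
      using u_c[OF q] A_c[OF A d _ z0 _ x] by auto
    have "(\<Oplus>uj\<in>{..<p} \<times> {..<m}. ?F uj) = (\<Oplus>uj\<in>prod.swap ` ({..<m} \<times> {..<p}). ?F uj)"
      by (simp only: sw)
    also have "\<dots> = (\<Oplus>ab\<in>{..<m} \<times> {..<p}. ?F (prod.swap ab))"
      by (rule finsum_reindex[OF Fc]) simp
    finally show ?thesis by simp
  qed
  finally show ?thesis .
qed

lemma encB_bt:
  assumes r: "\<sigma> \<in> fset R PB" and B: "datB B" and q: "q < Rk" and d: "d < M"
    and z0: "z0 < s div p" and y: "y < r div n"
  shows "encB R p n M s r (bf d \<sigma> (bt q)) B z0 y =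
    (\<Oplus>bc\<in>{..<p} \<times> {..<n}. v q (fst bc) (snd bc) \<otimes> B d (fst bc * (s div p) + z0) (snd bc * (r div n) + y))"
proof -
  let ?g = "\<lambda>l uk. bf d \<sigma> (bt q) l (fst uk) (snd uk) \<otimes> B l (fst uk * (s div p) + z0) (snd uk * (r div n) + y)"
  have gc: "l < M \<Longrightarrow> uk \<in> {..<p} \<times> {..<n} \<Longrightarrow> ?g l uk \<in> carrier R" for l uk
    using bf_c[OF r bt_c] B_c[OF B _ _ z0 _ y] by auto
  have "encB R p n M s r (bf d \<sigma> (bt q)) B z0 y = (\<Oplus>luk\<in>{..<M} \<times> ({..<p} \<times> {..<n}). ?g (fst luk) (snd luk))"
    unfolding encB_def by simp
  also have "\<dots> = (\<Oplus>l\<in>{..<M}. \<Oplus>uk\<in>{..<p} \<times> {..<n}. ?g l uk)"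
    by (subst finsum_Sigma_prod[of "{..<M}" "{..<p} \<times> {..<n}" "\<lambda>luk. ?g (fst luk) (snd luk)"]) (use gc in auto)
  also have "\<dots> = (\<Oplus>uk\<in>{..<p} \<times> {..<n}. ?g d uk)"
  proof (rule finsum_collapse)
    fix l assume l: "l \<in> {..<M}" "l \<noteq> d"
    show "(\<Oplus>uk\<in>{..<p} \<times> {..<n}. ?g l uk) = \<zero>"
    proof (rule finsum_allzero)
      fix uk assume "uk \<in> {..<p} \<times> {..<n}"
      then show "?g l uk = \<zero>" using bf_bt[OF r q, of l "fst uk" "snd uk" d] l B_c[OF B _ _ z0 _ y]
        by (auto simp: PB_def)
    qed
  qed (use d gc in \<open>auto intro!: finsum_closed\<close>)
  also have "\<dots> = (\<Oplus>bc\<in>{..<p} \<times> {..<n}. v q (fst bc) (snd bc) \<otimes> B d (fst bc * (s div p) + z0) (snd bc * (r div n) + y))"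
    by (rule finsum_cong') (use bf_bt[OF r q] d v_c[OF q] B_c[OF B d _ z0 _ y] in \<open>auto simp: PB_def\<close>)
  finally show ?thesis .
qed

definition UA where
  "UA A d x q z0 = (\<Oplus>ab\<in>{..<m} \<times> {..<p}. u q (fst ab) (snd ab) \<otimes> A d (snd ab * (s div p) + z0) (fst ab * (t div m) + x))"
definition VB where
  "VB B d y q z0 = (\<Oplus>bc\<in>{..<p} \<times> {..<n}. v q (fst bc) (snd bc) \<otimes> B d (fst bc * (s div p) + z0) (snd bc * (r div n) + y))"

lemma UA_c: "datA A \<Longrightarrow> d < M \<Longrightarrow> q < Rk \<Longrightarrow> z0 < s div p \<Longrightarrow> x < t div m \<Longrightarrow> UA A d x q z0 \<in> carrier R"
  unfolding UA_def using u_c A_c by (auto intro!: finsum_closed)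
lemma VB_c: "datB B \<Longrightarrow> d < M \<Longrightarrow> q < Rk \<Longrightarrow> z0 < s div p \<Longrightarrow> y < r div n \<Longrightarrow> VB B d y q z0 \<in> carrier R"
  unfolding VB_def using v_c B_c by (auto intro!: finsum_closed)

lemma Wf_bt:
  assumes "\<rho> \<in> fset R PA" "\<sigma> \<in> fset R PB" "datA A" "datB B" "q < Rk" "d < M" "x < t div m" "y < r div n"
  shows "Wf d \<rho> \<sigma> A B x y (bt q) = (\<Oplus>z0\<in>{..<s div p}. UA A d x q z0 \<otimes> VB B d y q z0)"
  unfolding Wf_def worker_result_def fst_conv snd_conv
  by (rule finsum_cong') (use assms encA_bt encB_bt UA_c VB_c in \<open>auto simp: UA_def[symmetric] VB_def[symmetric]\<close>)

lemma target_eq: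
  assumes A: "datA A" and B: "datB B" and d: "d < M" and j: "j < m" and k: "k < n"
    and x: "x < t div m" and y: "y < r div n"
  shows "target R s A B d (j * (t div m) + x) (k * (r div n) + y) =
    (\<Oplus>q\<in>{..<Rk}. w q j k \<otimes> (\<Oplus>z0\<in>{..<s div p}. UA A d x q z0 \<otimes> VB B d y q z0))"
proof -
  let ?h = "\<lambda>z. A d z (j * (t div m) + x) \<otimes> B d z (k * (r div n) + y)"
  have hc: "z < s \<Longrightarrow> ?h z \<in> carrier R" for z
  proof -
    assume z: "z < s"
    have "j * (t div m) + x < t" using idx_lt[OF j x] tdiv by simp
    moreover have "k * (r div n) + y < r" using idx_lt[OF k y] rdiv by simp
    ultimately show ?thesis using A B d z unfolding datA_def datB_def mat_in_def by auto
  qed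
  have hc2: "uu < p \<Longrightarrow> z0 < s div p \<Longrightarrow> ?h (uu * (s div p) + z0) \<in> carrier R" for uu z0
    using hc idx_lt[of uu p z0 "s div p"] sdiv by simp
  have UVc: "q < Rk \<Longrightarrow> z0 < s div p \<Longrightarrow> UA A d x q z0 \<otimes> VB B d y q z0 \<in> carrier R" for q z0
    using UA_c[OF A d _ _ x] VB_c[OF B d _ _ y] by simp
  have "target R s A B d (j * (t div m) + x) (k * (r div n) + y) = (\<Oplus>z\<in>{..<p * (s div p)}. ?h z)"
    unfolding target_def using sdiv by simp
  also have "\<dots> = (\<Oplus>uu\<in>{..<p}. \<Oplus>z0\<in>{..<s div p}. ?h (uu * (s div p) + z0))"
    by (rule finsum_split_nat) (use hc sdiv in auto)
  also have "\<dots> = (\<Oplus>z0\<in>{..<s div p}. \<Oplus>uu\<in>{..<p}. ?h (uu * (s div p) + z0))"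
    by (rule finsum_swap) (use hc2 in auto)
  also have "\<dots> = (\<Oplus>z0\<in>{..<s div p}. \<Oplus>q\<in>{..<Rk}. (UA A d x q z0 \<otimes> VB B d y q z0) \<otimes> w q j k)"
  proof (rule finsum_cong')
    fix z0 assume z0: "z0 \<in> {..<s div p}"
    let ?X = "\<lambda>a b. A d (b * (s div p) + z0) (a * (t div m) + x)"
    let ?Y = "\<lambda>b c. B d (b * (s div p) + z0) (c * (r div n) + y)"
    have X: "mat_in R m p ?X" unfolding mat_in_def using A_c[OF A d _ _ _ x] z0 by auto
    have Y: "mat_in R p n ?Y" unfolding mat_in_def using B_c[OF B d _ _ _ y] z0 by auto
    show "(\<Oplus>uu\<in>{..<p}. ?h (uu * (s div p) + z0)) = (\<Oplus>q\<in>{..<Rk}. (UA A d x q z0 \<otimes> VB B d y q z0) \<otimes> w q j k)"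
      using bil[OF X Y j k] unfolding UA_def VB_def by simp
  qed (use UVc w_c j k in \<open>auto intro!: finsum_closed\<close>)
  also have "\<dots> = (\<Oplus>q\<in>{..<Rk}. \<Oplus>z0\<in>{..<s div p}. (UA A d x q z0 \<otimes> VB B d y q z0) \<otimes> w q j k)"
    by (rule finsum_swap) (use UVc w_c j k in auto)
  also have "\<dots> = (\<Oplus>q\<in>{..<Rk}. w q j k \<otimes> (\<Oplus>z0\<in>{..<s div p}. UA A d x q z0 \<otimes> VB B d y q z0))"
  proof (rule finsum_cong')
    fix q assume q: "q \<in> {..<Rk}"
    have "w q j k \<otimes> (\<Oplus>z0\<in>{..<s div p}. UA A d x q z0 \<otimes> VB B d y q z0) =
          (\<Oplus>z0\<in>{..<s div p}. w q j k \<otimes> (UA A d x q z0 \<otimes> VB B d y q z0))"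
      by (rule finsum_rdistr) (use UVc w_c j k q in auto)
    also have "\<dots> = (\<Oplus>z0\<in>{..<s div p}. (UA A d x q z0 \<otimes> VB B d y q z0) \<otimes> w q j k)"
      by (rule finsum_cong') (use UVc w_c j k q in \<open>auto simp: m_comm\<close>)
    finally show "(\<Oplus>z0\<in>{..<s div p}. (UA A d x q z0 \<otimes> VB B d y q z0) \<otimes> w q j k) =
          w q j k \<otimes> (\<Oplus>z0\<in>{..<s div p}. UA A d x q z0 \<otimes> VB B d y q z0)" by simp
  qed (use UVc w_c j k in \<open>auto intro!: finsum_closed\<close>)
  finally show ?thesis .
qed

lemma decode:
  assumes r: "\<rho> \<in> fset R PA" and sg: "\<sigma> \<in> fset R PB" and d: "d < M"
    and S: "S \<subseteq> {..<N}" and cS: "card S = 2 * Rk + 1"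
  shows "\<exists>c. (\<forall>j<m. \<forall>k<n. \<forall>i\<in>S. c j k i \<in> carrier R) \<and>
     (\<forall>A B. (\<forall>l<M. mat_in R s t (A l)) \<longrightarrow> (\<forall>l<M. mat_in R s r (B l)) \<longrightarrow>
        (\<forall>j<m. \<forall>k<n. \<forall>x<t div m. \<forall>y<r div n.
           target R s A B d (j * (t div m) + x) (k * (r div n) + y) =
           (\<Oplus>i\<in>S. c j k i \<otimes> worker_result R p m n M s t r (af d \<rho> (xp i), bf d \<sigma> (xp i)) A B x y)))"
proof -
  have fS: "finite S" using S finite_subset by blast
  have iS: "inj_on xp S" using xp_inj S inj_on_subset by blast
  have xS: "xp ` S \<subseteq> carrier R" using xp_c by auto
  have "\<forall>q. \<exists>\<gamma>. (\<forall>i. \<gamma> i \<in> carrier R) \<and> (\<forall>g<card S. (\<Oplus>i\<in>S. \<gamma> i \<otimes> xp i [^] g) = bt q [^] g)"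
    using interp_exists[OF fS iS xS bt_c] by blast
  then obtain \<Gamma> where \<Gamma>c: "\<And>q i. \<Gamma> q i \<in> carrier R"
    and \<Gamma>e: "\<And>q g. g < card S \<Longrightarrow> (\<Oplus>i\<in>S. \<Gamma> q i \<otimes> xp i [^] g) = bt q [^] g"
    by metis
  define c where "c j k i = (\<Oplus>q\<in>{..<Rk}. w q j k \<otimes> \<Gamma> q i)" for j k i
  have cc: "j < m \<Longrightarrow> k < n \<Longrightarrow> c j k i \<in> carrier R" for j k i
    unfolding c_def using w_c \<Gamma>c by (auto intro!: finsum_closed)
  show ?thesis
  proof (intro exI[of _ c] conjI allI impI ballI)
    fix j k i assume "j < m" "k < n" then show "c j k i \<in> carrier R" using cc by simp
  next
    fix A B j k x y
    assume A0: "\<forall>l<M. mat_in R s t (A l)" and B0: "\<forall>l<M. mat_in R s r (B l)"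
      and j: "j < m" and k: "k < n" and x: "x < t div m" and y: "y < r div n"
    have A: "datA A" using A0 unfolding datA_def .
    have B: "datB B" using B0 unfolding datB_def .
    let ?W = "Wf d \<rho> \<sigma> A B x y"
    have Wp: "poly_le R (Rk + Rk) ?W" by (rule Wf_poly[OF r sg A B x y])
    have Wc: "z \<in> carrier R \<Longrightarrow> ?W z \<in> carrier R" for z using poly_le_carrier[OF Wp] .
    have "(\<Oplus>i\<in>S. c j k i \<otimes> worker_result R p m n M s t r (af d \<rho> (xp i), bf d \<sigma> (xp i)) A B x y) =
          (\<Oplus>i\<in>S. c j k i \<otimes> ?W (xp i))"
      unfolding Wf_def by simp
    also have "\<dots> = (\<Oplus>i\<in>S. \<Oplus>q\<in>{..<Rk}. w q j k \<otimes> (\<Gamma> q i \<otimes> ?W (xp i)))"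
    proof (rule finsum_cong')
      fix i assume i: "i \<in> S"
      have "c j k i \<otimes> ?W (xp i) = (\<Oplus>q\<in>{..<Rk}. w q j k \<otimes> \<Gamma> q i \<otimes> ?W (xp i))"
        unfolding c_def by (rule finsum_ldistr) (use w_c j k \<Gamma>c Wc xp_c in auto)
      also have "\<dots> = (\<Oplus>q\<in>{..<Rk}. w q j k \<otimes> (\<Gamma> q i \<otimes> ?W (xp i)))"
        by (rule finsum_cong') (use w_c j k \<Gamma>c Wc xp_c in \<open>auto simp: m_assoc\<close>)
      finally show "c j k i \<otimes> ?W (xp i) = (\<Oplus>q\<in>{..<Rk}. w q j k \<otimes> (\<Gamma> q i \<otimes> ?W (xp i)))" .
    qed (use w_c j k \<Gamma>c Wc xp_c in \<open>auto intro!: finsum_closed\<close>)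
    also have "\<dots> = (\<Oplus>q\<in>{..<Rk}. \<Oplus>i\<in>S. w q j k \<otimes> (\<Gamma> q i \<otimes> ?W (xp i)))"
      by (rule finsum_swap) (use fS w_c j k \<Gamma>c Wc xp_c in auto)
    also have "\<dots> = (\<Oplus>q\<in>{..<Rk}. w q j k \<otimes> (\<Oplus>z0\<in>{..<s div p}. UA A d x q z0 \<otimes> VB B d y q z0))"
    proof (rule finsum_cong')
      fix q assume q: "q \<in> {..<Rk}"
      have "(\<Oplus>i\<in>S. w q j k \<otimes> (\<Gamma> q i \<otimes> ?W (xp i))) = w q j k \<otimes> (\<Oplus>i\<in>S. \<Gamma> q i \<otimes> ?W (xp i))"
        by (rule finsum_rdistr[symmetric]) (use fS w_c j k q \<Gamma>c Wc xp_c in auto)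
      also have "(\<Oplus>i\<in>S. \<Gamma> q i \<otimes> ?W (xp i)) = ?W (bt q)"
        by (rule poly_eval_comb[OF Wp fS \<Gamma>c xp_c bt_c]) (use \<Gamma>e cS in auto)
      also have "?W (bt q) = (\<Oplus>z0\<in>{..<s div p}. UA A d x q z0 \<otimes> VB B d y q z0)"
        using Wf_bt[OF r sg A B _ d x y] q by simp
      finally show "(\<Oplus>i\<in>S. w q j k \<otimes> (\<Gamma> q i \<otimes> ?W (xp i))) =
          w q j k \<otimes> (\<Oplus>z0\<in>{..<s div p}. UA A d x q z0 \<otimes> VB B d y q z0)" .
    qed (use w_c j k UA_c[OF A d _ _ x] VB_c[OF B d _ _ y] in \<open>auto intro!: finsum_closed\<close>)
    also have "\<dots> = target R s A B d (j * (t div m) + x) (k * (r div n) + y)"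
      using target_eq[OF A B d j k x y] by simp
    finally show "target R s A B d (j * (t div m) + x) (k * (r div n) + y) =
      (\<Oplus>i\<in>S. c j k i \<otimes> worker_result R p m n M s t r (af d \<rho> (xp i), bf d \<sigma> (xp i)) A B x y)" by simp
  qed
qed

definition mu :: "nat \<Rightarrow> (nat \<Rightarrow> 'a query) pmf" where
  "mu d = map_pmf (\<lambda>(\<rho>, \<sigma>). \<lambda>i. (af d \<rho> (xp i), bf d \<sigma> (xp i))) (pmf_of_set (fset R PA \<times> fset R PB))"

lemma scheme_ok:
  assumes fin: "finite (carrier R)"
  shows "valid_private_scheme R p m n M N mu \<and> achieves_threshold R p m n M N s t r mu (2 * Rk + 1)"
proof -
  let ?SA = "fset R PA" and ?SB = "fset R PB"
  have fA: "finite ?SA" by (rule fset_finite[OF fin]) (auto simp: PA_def)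
  have fB: "finite ?SB" by (rule fset_finite[OF fin]) (auto simp: PB_def)
  have nA: "?SA \<noteq> {}" using fset_nonempty by blast
  have nB: "?SB \<noteq> {}" using fset_nonempty by blast
  have fAB: "finite (?SA \<times> ?SB)" using fA fB by simp
  have nAB: "?SA \<times> ?SB \<noteq> {}" using nA nB by simp
  have setmu: "set_pmf (mu d) = (\<lambda>(\<rho>, \<sigma>). \<lambda>i. (af d \<rho> (xp i), bf d \<sigma> (xp i))) ` (?SA \<times> ?SB)" for d
    unfolding mu_def using set_pmf_of_set[OF nAB fAB] by simp
  have marg: "map_pmf (\<lambda>Q. Q i) (mu d) = pmf_of_set (?SA \<times> ?SB)" if i: "i < N" for i d
  proof -
    let ?f = "tmap R PA (cA d (xp i)) (Pz (xp i))"
    let ?g = "tmap R PB (cB d (xp i)) (Pz (xp i))"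
    have tc: "Pz (xp i) \<in> carrier R" "Pz (xp i) \<noteq> \<zero>" using Pz_c[OF xp_c] Pz_nz[OF i] by auto
    have "map_pmf (\<lambda>Q. Q i) (mu d) = map_pmf (map_prod ?f ?g) (pmf_of_set (?SA \<times> ?SB))"
      unfolding mu_def map_pmf_comp by (rule map_pmf_cong) (auto simp: af_def bf_def)
    also have "\<dots> = pmf_of_set (map_prod ?f ?g ` (?SA \<times> ?SB))"
      by (rule map_pmf_of_set_inj[OF map_prod_inj_on nAB fAB])
        (use tmap_inj[OF tc] cA_c[OF xp_c] cB_c[OF xp_c] in auto)
    also have "map_prod ?f ?g ` (?SA \<times> ?SB) = ?SA \<times> ?SB"
      by (rule map_prod_surj_on) (use tmap_image[OF tc] cA_c[OF xp_c] cB_c[OF xp_c] in auto)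
    finally show ?thesis .
  qed
  have valid: "valid_private_scheme R p m n M N mu"
    unfolding valid_private_scheme_def
  proof (intro conjI allI impI ballI)
    fix d assume "d < M"
    show "finite (set_pmf (mu d))" unfolding setmu using fAB by simp
  next
    fix d Q i assume d: "d < M" and Q: "Q \<in> set_pmf (mu d)" and i: "i < N"
    then obtain \<rho> \<sigma> where rs: "\<rho> \<in> ?SA" "\<sigma> \<in> ?SB" and Qe: "Q = (\<lambda>i. (af d \<rho> (xp i), bf d \<sigma> (xp i)))"
      unfolding setmu by auto
    show "query_in R p m n M (Q i)"
      unfolding query_in_def Qe using af_c[OF rs(1) xp_c] bf_c[OF rs(2) xp_c] by simp
  next
    fix i d d' assume "i < N" "d < M" "d' < M"
    then show "map_pmf (\<lambda>Q. Q i) (mu d) = map_pmf (\<lambda>Q. Q i) (mu d')" using marg by simp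
  qed
  have thr: "achieves_threshold R p m n M N s t r mu (2 * Rk + 1)"
    unfolding achieves_threshold_def
  proof (intro allI impI ballI)
    fix d Q S assume d: "d < M" and Q: "Q \<in> set_pmf (mu d)" and S: "S \<subseteq> {..<N} \<and> card S = 2 * Rk + 1"
    then obtain \<rho> \<sigma> where rs: "\<rho> \<in> ?SA" "\<sigma> \<in> ?SB" and Qe: "Q = (\<lambda>i. (af d \<rho> (xp i), bf d \<sigma> (xp i)))"
      unfolding setmu by auto
    show "\<exists>c. (\<forall>j<m. \<forall>k<n. \<forall>i\<in>S. c j k i \<in> carrier R) \<and>
             (\<forall>A B. (\<forall>l<M. mat_in R s t (A l)) \<longrightarrow> (\<forall>l<M. mat_in R s r (B l)) \<longrightarrow>
                (\<forall>j<m. \<forall>k<n. \<forall>x<t div m. \<forall>y<r div n.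
                   target R s A B d (j * (t div m) + x) (k * (r div n) + y) =
                   (\<Oplus>i\<in>S. c j k i \<otimes> worker_result R p m n M s t r (Q i) A B x y)))"
      unfolding Qe using decode[OF rs d] S by simp
  qed
  show ?thesis using valid thr by simp
qed

end



theorem theorem3:
  fixes p m n M N s t r :: nat
  assumes "p \<ge> 1" and "m \<ge> 1" and "n \<ge> 1" and "M > 1"
    and "p dvd s" and "m dvd t" and "n dvd r"
  shows "\<exists>q0::nat. \<forall>F :: 'a ring.
           field F \<and> finite (carrier F) \<and> card (carrier F) \<ge> q0 \<longrightarrow>
           (\<exists>mu. valid_private_scheme F p m n M N mu \<and>
                 achieves_threshold F p m n M N s t r mu (2 * bilinear_complexity F p m n + 1))"
proof (intro exI[of _ "N + m * (p * n)"] allI impI)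
  fix F :: "'a ring"
  assume H: "field F \<and> finite (carrier F) \<and> N + m * (p * n) \<le> card (carrier F)"
  then have fF: "field F" and fin: "finite (carrier F)" and cardF: "N + m * (p * n) \<le> card (carrier F)" by auto
  interpret ffield F by (rule ffield.intro[OF fF])
  define Rk where "Rk = bilinear_complexity F p m n"
  have ex: "bilinear_alg F p m n (m * (p * n))" by (rule bil_exists)
  have balg: "bilinear_alg F p m n Rk" unfolding Rk_def bilinear_complexity_def by (rule LeastI[of "bilinear_alg F p m n", OF ex])
  have Rle: "Rk \<le> m * (p * n)" unfolding Rk_def bilinear_complexity_def by (rule Least_le[of "bilinear_alg F p m n", OF ex])
  obtain u v w where
    uc: "\<forall>q<Rk. \<forall>a<m. \<forall>b<p. u q a b \<in> carrier F" and
    vc: "\<forall>q<Rk. \<forall>b<p. \<forall>c<n. v q b c \<in> carrier F" and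
    wc: "\<forall>q<Rk. \<forall>a<m. \<forall>c<n. w q a c \<in> carrier F" and
    bl: "\<forall>X Y. mat_in F m p X \<longrightarrow> mat_in F p n Y \<longrightarrow>
          (\<forall>a<m. \<forall>c<n.
             (\<Oplus>\<^bsub>F\<^esub>b\<in>{..<p}. X a b \<otimes>\<^bsub>F\<^esub> Y b c) =
             (\<Oplus>\<^bsub>F\<^esub>q\<in>{..<Rk}.
                ((\<Oplus>\<^bsub>F\<^esub>ab\<in>{..<m} \<times> {..<p}. u q (fst ab) (snd ab) \<otimes>\<^bsub>F\<^esub> X (fst ab) (snd ab))
                 \<otimes>\<^bsub>F\<^esub>
                 (\<Oplus>\<^bsub>F\<^esub>bc\<in>{..<p} \<times> {..<n}. v q (fst bc) (snd bc) \<otimes>\<^bsub>F\<^esub> Y (fst bc) (snd bc)))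
                \<otimes>\<^bsub>F\<^esub> w q a c))"
    using balg[unfolded bilinear_alg_def] by (elim exE conjE) (rule that; assumption)
  obtain e where e: "bij_betw e {0..<card (carrier F)} (carrier F)"
    using ex_bij_betw_nat_finite[OF fin] by blast
  define bt where "bt q = (if q < card (carrier F) then e q else \<zero>\<^bsub>F\<^esub>)" for q
  define xp where "xp i = (if Rk + i < card (carrier F) then e (Rk + i) else \<zero>\<^bsub>F\<^esub>)" for i
  have ec: "k < card (carrier F) \<Longrightarrow> e k \<in> carrier F" for k using e bij_betwE by fastforce
  have einj: "k < card (carrier F) \<Longrightarrow> k' < card (carrier F) \<Longrightarrow> e k = e k' \<Longrightarrow> k = k'" for k k'
    using e unfolding bij_betw_def inj_on_def by auto
  have RN: "Rk + N \<le> card (carrier F)" using Rle cardF by simp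
  have sc: "sch F Rk bt xp u v w p m n N s t r"
  proof (rule sch.intro)
    show "ffield F" by (rule ffield.intro[OF fF])
    show "sch_axioms F Rk bt xp u v w p m n N s t r"
    proof (unfold sch_axioms_def, intro conjI allI impI)
      show "bt q \<in> carrier F" for q unfolding bt_def using ec by simp
      show "xp i \<in> carrier F" for i unfolding xp_def using ec by simp
      show "inj_on bt {..<Rk}" unfolding bt_def using RN einj by (auto simp: inj_on_def)
      show "inj_on xp {..<N}"
      proof (rule inj_onI)
        fix x y assume x: "x \<in> {..<N}" and y: "y \<in> {..<N}" and eq: "xp x = xp y"
        have lt: "Rk + x < card (carrier F)" "Rk + y < card (carrier F)" using x y RN by auto
        then have "e (Rk + x) = e (Rk + y)" using eq unfolding xp_def by simp
        then show "x = y" using einj[of "Rk + x" "Rk + y"] lt by simp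
      qed
      show "bt q \<noteq> xp i" if "q < Rk" "i < N" for q i
        unfolding bt_def xp_def using that RN einj[of q "Rk + i"] by auto
      show "u q a b \<in> carrier F" if "q < Rk" "a < m" "b < p" for q a b using uc that by blast
      show "v q b c \<in> carrier F" if "q < Rk" "b < p" "c < n" for q b c using vc that by blast
      show "w q a c \<in> carrier F" if "q < Rk" "a < m" "c < n" for q a c using wc that by blast
      show "s = p * (s div p)" using assms(5) by simp
      show "t = m * (t div m)" using assms(6) by simp
      show "r = n * (r div n)" using assms(7) by simp
    qed (rule bl[rule_format]; assumption)
  qed
  show "\<exists>mu. valid_private_scheme F p m n M N mu \<and>
          achieves_threshold F p m n M N s t r mu (2 * bilinear_complexity F p m n + 1)"
    using sch.scheme_ok[where M=M, OF sc fin] unfolding Rk_def by blast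
qed


end
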